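(* Let $\beta>0$ and feasible $\lambda$ be fixed. Suppose $0<\xi<a/2$ and $\rho\in\mathcal{P}$. If $d_0>\tau(\beta)a$, where $\tau(\beta)=\frac{\beta+2}{\beta+1}$ for $0<\beta<1$ and $\tau(\beta)=\frac32$ for $\beta\ge1$, then $\lim_{\delta\to0^+}E_\xi(\delta)=0$.
   Context: Fix $a>0$. For $0<\delta<1$ and constants $\beta>0$, $\lambda\in\mathbb{R}$, put $\mu=\delta+\lambda\delta^{\beta}$. The constant $\lambda$ is feasible if $\lambda>0$ when $0<\beta<1$, $\lambda\ge-1$ when $\beta=1$, $\lambda\ne0$ when $\beta>1$; then $\delta_\mu\in(0,1)$ denotes a number with $\mu\ge0$ for $0<\delta\le\delta_\mu$ (all $\delta$ considered satisfy $0<\delta\le\delta_\mu$). The dielectric constant is $\varepsilon_c=1+\mathrm{i}\mu$ for $x<0$, $\varepsilon_s=-1+\mathrm{i}\delta$ for $0\le x\le a$, $\varepsilon_m=1$ for $x>a$. Let $\mathcal{M}=\{(x,y)\in\mathbb{R}^2:x>a\}$. $\mathcal{P}$ is the set of real-valued $\rho\in L^2(\mathcal{M})\cap L^\infty(\mathcal{M})$ with compact support in $\mathcal{M}$, with $0<|\operatorname{supp}\rho|<\infty$ and $\int\!\!\int\rho\,\mathrm{d}y\,\mathrm{d}x=0$; $\rho$ is extended by $0$ to $\mathbb{R}^2$. Put $d_0=\min\{x:(x,y)\in\operatorname{supp}\rho\}$, $d_1=\max\{x:(x,y)\in\operatorname{supp}\rho\}$. The Fourier transform in $y$ is $\widehat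 f(x,k)=\int_{-\infty}^{\infty}f(x,y)\mathrm{e}^{-\mathrm{i}ky}\,\mathrm{d}y$, and $I_k=\int_{d_0}^{d_1}\widehat\rho(s,k)\mathrm{e}^{-|k|s}\,\mathrm{d}s$. The potential $V$: let $\chi_c=\varepsilon_s/\varepsilon_c$, $\psi_k^+=\frac{1}{2\chi_c}[(\chi_c+1)\mathrm{e}^{|k|a}+(\chi_c-1)\mathrm{e}^{-|k|a}]$, $\psi_k^-=\frac{|k|\varepsilon_s}{2\chi_c}[(\chi_c+1)\mathrm{e}^{|k|a}-(\chi_c-1)\mathrm{e}^{-|k|a}]$, $A_k=I_k/(\mathrm{e}^{-|k|a}(|k|\psi_k^++\psi_k^-))$. For $k\ne0$ set $\widehat V(x,k)=A_k\mathrm{e}^{|k|x}$ for $x<0$; $\widehat V(x,k)=\frac{A_k}{2\chi_c}[(\chi_c+1)\mathrm{e}^{|k|x}+(\chi_c-1)\mathrm{e}^{-|k|x}]$ for $0\le x\le a$; $\widehat V(x,k)=A_k\psi_k^+\cosh(|k|(x-a))+\frac{A_k\psi_k^-}{|k|}\sinh(|k|(x-a))+\frac1{|k|}\int_a^x\sinh(|k|(x'-x))\widehat\rho(x',k)\,\mathrm{d}x'$ for $x>a$. $V(x,\cdot)$ is the function whose $y$-Fourier transform is $\widehat V(x,\cdot)$; it is the (up to an additive constant unique) solution of $-\nabla\cdot(\varepsilon\nabla V)=\rho$ in $\mathbb{R}^2$ with $V$ and $\varepsilon\,\partial_xV$ continuous across $x=0,a$, $\partial_xV\to0$ as $|x|\to\infty$,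 $V(x,\cdot)\in H^1(\mathbb{R})$, $\partial_xV(x,\cdot)\in L^2(\mathbb{R})$. For $0<\xi<a$ the power dissipation is \[ E_\xi(\delta)=\delta\int_{a-\xi}^{a}\int_{-\infty}^{\infty}|\nabla V(x,y)|^2\,\mathrm{d}y\,\mathrm{d}x . \] *)

theory Defs
  imports "HOL-Analysis.Analysis"
begin

text \<open>Parameters: a > 0 (slab width), beta > 0, lam (the constant lambda),
  delta (loss parameter), rho (charge density, curried as rho x y).\<close>

definition feasible :: "real \<Rightarrow> real \<Rightarrow> bool" where
  "feasible beta lam \<longleftrightarrow>
     (beta < 1 \<longrightarrow> lam > 0) \<and> (beta = 1 \<longrightarrow> lam \<ge> -1) \<and> (beta > 1 \<longrightarrow> lam \<noteq> 0)"

definition tau :: "real \<Rightarrow> real" where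
  "tau beta = (if beta < 1 then (beta + 2) / (beta + 1) else 3 / 2)"

definition mu :: "real \<Rightarrow> real \<Rightarrow> real \<Rightarrow> real" where
  "mu beta lam delta = delta + lam * delta powr beta"

definition eps_c :: "real \<Rightarrow> real \<Rightarrow> real \<Rightarrow> complex" where
  "eps_c beta lam delta = Complex 1 (mu beta lam delta)"

definition eps_s :: "real \<Rightarrow> complex" where
  "eps_s delta = Complex (-1) delta"

definition chi_c :: "real \<Rightarrow> real \<Rightarrow> real \<Rightarrow> complex" where
  "chi_c beta lam delta = eps_s delta / eps_c beta lam delta"

definition psi_p :: "real \<Rightarrow> real \<Rightarrow> real \<Rightarrow> real \<Rightarrow> real \<Rightarrow> complex" where
  "psi_p a beta lam delta k =
     (let ch = chi_c beta lam delta in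
       ((ch + 1) * of_real (exp (\<bar>k\<bar> * a)) + (ch - 1) * of_real (exp (- \<bar>k\<bar> * a))) / (2 * ch))"

definition psi_m :: "real \<Rightarrow> real \<Rightarrow> real \<Rightarrow> real \<Rightarrow> real \<Rightarrow> complex" where
  "psi_m a beta lam delta k =
     (let ch = chi_c beta lam delta in
       of_real \<bar>k\<bar> * eps_s delta / (2 * ch) *
       ((ch + 1) * of_real (exp (\<bar>k\<bar> * a)) - (ch - 1) * of_real (exp (- \<bar>k\<bar> * a))))"

definition supp :: "(real \<Rightarrow> real \<Rightarrow> real) \<Rightarrow> (real \<times> real) set" where
  "supp rho = closure {(x, y). rho x y \<noteq> 0}"

definition d0 :: "(real \<Rightarrow> real \<Rightarrow> real) \<Rightarrow> real" where
  "d0 rho = Inf (fst ` supp rho)"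

definition d1 :: "(real \<Rightarrow> real \<Rightarrow> real) \<Rightarrow> real" where
  "d1 rho = Sup (fst ` supp rho)"

text \<open>The admissible class P (rho extended by 0 outside M).\<close>

definition in_P :: "real \<Rightarrow> (real \<Rightarrow> real \<Rightarrow> real) \<Rightarrow> bool" where
  "in_P a rho \<longleftrightarrow>
     (\<lambda>(x, y). rho x y) \<in> borel_measurable (lborel :: (real \<times> real) measure) \<and>
     integrable (lborel :: (real \<times> real) measure) (\<lambda>(x, y). (rho x y)\<^sup>2) \<and>
     (\<exists>C. AE p in (lborel :: (real \<times> real) measure). \<bar>(case p of (x, y) \<Rightarrow> rho x y)\<bar> \<le> C) \<and>
     compact (supp rho) \<and> supp rho \<subseteq> {(x, y). x > a} \<and>
     0 < emeasure lborel (supp rho) \<and> emeasure lborel (supp rho) < \<infinity> \<and>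
     integral\<^sup>L (lborel :: (real \<times> real) measure) (\<lambda>(x, y). rho x y) = 0"

definition rho_hat :: "(real \<Rightarrow> real \<Rightarrow> real) \<Rightarrow> real \<Rightarrow> real \<Rightarrow> complex" where
  "rho_hat rho x k = (LINT y|lborel. of_real (rho x y) * cis (- (k * y)))"

definition I_k :: "(real \<Rightarrow> real \<Rightarrow> real) \<Rightarrow> real \<Rightarrow> complex" where
  "I_k rho k = (LINT s:{d0 rho..d1 rho}|lborel. rho_hat rho s k * of_real (exp (- \<bar>k\<bar> * s)))"

definition A_k :: "real \<Rightarrow> real \<Rightarrow> real \<Rightarrow> (real \<Rightarrow> real \<Rightarrow> real) \<Rightarrow> real \<Rightarrow> real \<Rightarrow> complex" where
  "A_k a beta lam rho delta k =
     I_k rho k / (of_real (exp (- \<bar>k\<bar> * a)) *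
       (of_real \<bar>k\<bar> * psi_p a beta lam delta k + psi_m a beta lam delta k))"

text \<open>Fourier transform of the potential (the value at k = 0, a null set, is set to 0).\<close>

definition V_hat :: "real \<Rightarrow> real \<Rightarrow> real \<Rightarrow> (real \<Rightarrow> real \<Rightarrow> real) \<Rightarrow> real \<Rightarrow> real \<Rightarrow> real \<Rightarrow> complex" where
  "V_hat a beta lam rho delta x k =
     (let A = A_k a beta lam rho delta k; ch = chi_c beta lam delta; K = \<bar>k\<bar> in
      if k = 0 then 0
      else if x < 0 then A * of_real (exp (K * x))
      else if x \<le> a then A / (2 * ch) *
             ((ch + 1) * of_real (exp (K * x)) + (ch - 1) * of_real (exp (- K * x)))
      else A * psi_p a beta lam delta k * of_real (cosh (K * (x - a)))
           + A * psi_m a beta lam delta k / of_real K * of_real (sinh (K * (x - a)))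
           + (1 / of_real K) * (LINT x':{a..x}|lborel. of_real (sinh (K * (x' - x))) * rho_hat rho x' k))"

definition V :: "real \<Rightarrow> real \<Rightarrow> real \<Rightarrow> (real \<Rightarrow> real \<Rightarrow> real) \<Rightarrow> real \<Rightarrow> real \<Rightarrow> real \<Rightarrow> complex" where
  "V a beta lam rho delta x y =
     (LINT k|lborel. V_hat a beta lam rho delta x k * cis (k * y)) / of_real (2 * pi)"

definition E :: "real \<Rightarrow> real \<Rightarrow> real \<Rightarrow> (real \<Rightarrow> real \<Rightarrow> real) \<Rightarrow> real \<Rightarrow> real \<Rightarrow> ennreal" where
  "E a beta lam rho xi delta =
     ennreal delta *
     (\<integral>\<^sup>+ x\<in>{a - xi..a}. (\<integral>\<^sup>+ y.
        ennreal ((norm (vector_derivative (\<lambda>x'. V a beta lam rho delta x' y) (at x)))\<^sup>2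
               + (norm (vector_derivative (\<lambda>y'. V a beta lam rho delta x y') (at y)))\<^sup>2)
        \<partial>lborel) \<partial>lborel)"

end

theory Submission
  imports Defs "HOL-Probability.Characteristic_Functions"
begin

lemma cis_borel: "cis \<in> borel_measurable borel"
  by (rule borel_measurable_continuous_onI) (simp add: cis_conv_exp continuous_intros)

lemma measurable_cis[measurable (raw)]: "f \<in> borel_measurable M \<Longrightarrow> (\<lambda>x. cis (f x)) \<in> borel_measurable M"
  using measurable_compose[OF _ cis_borel] by blast

lemma cnj_borel: "cnj \<in> borel_measurable borel"
  by (rule borel_measurable_continuous_onI) (simp add: continuous_intros)

lemma measurable_cnj[measurable (raw)]: "f \<in> borel_measurable M \<Longrightarrow> (\<lambda>x. cnj (f x)) \<in> borel_measurable M"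
  using measurable_compose[OF _ cnj_borel] by blast

lemma gauss_ft:
  fixes n u :: real assumes n: "n > 0"
  shows "(LINT y|lborel. complex_of_real (exp (-((y/n)^2)/2)) * cis (u*y))
        = complex_of_real (n * sqrt (2*pi) * exp (-((n*u)^2)/2))"
proof -
  have c: "char std_normal_distribution (n*u) = (LINT x|lborel. std_normal_density x *\<^sub>R iexp (n*u*x))"
    unfolding char_def
    by (subst integral_density) auto
  have "(LINT y|lborel. complex_of_real (exp (-((y/n)^2)/2)) * cis (u*y))
     = n *\<^sub>R (LINT x|lborel. complex_of_real (exp (-(((0 + n*x)/n)^2)/2)) * cis (u*(0 + n*x)))"
    using lborel_integral_real_affine[of n "\<lambda>y. complex_of_real (exp (-((y/n)^2)/2)) * cis (u*y)" 0] n
    by simp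
  also have "(LINT x|lborel. complex_of_real (exp (-(((0 + n*x)/n)^2)/2)) * cis (u*(0 + n*x)))
      = sqrt (2*pi) *\<^sub>R (LINT x|lborel. std_normal_density x *\<^sub>R iexp (n*u*x))"
    apply (subst integral_scaleR_right[symmetric])
    apply (rule Bochner_Integration.integral_cong)
    using n by (auto simp: std_normal_density_def cis_conv_exp scaleR_conv_of_real algebra_simps)
  finally show ?thesis using c char_std_normal_distribution
    by (simp add: scaleR_conv_of_real)
qed

lemma norm_integral_le_nn:
  fixes f :: "'a \<Rightarrow> 'b::{banach, second_countable_topology}"
  shows "ennreal (norm (integral\<^sup>L M f)) \<le> (\<integral>\<^sup>+x. norm (f x) \<partial>M)"
  by (cases "integrable M f") (auto simp: integral_norm_bound_ennreal not_integrable_integral_eq)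

lemma integrable_pair_bound:
  fixes F :: "real \<times> real \<Rightarrow> 'b::{banach, second_countable_topology}"
  assumes Fm: "F \<in> borel_measurable (lborel \<Otimes>\<^sub>M lborel)"
    and u: "integrable lborel u" and v: "integrable lborel v"
    and b: "\<And>x y. norm (F (x, y)) \<le> u x * v y"
    and u0: "\<And>x. u x \<ge> 0" and v0: "\<And>y. v y \<ge> 0"
  shows "integrable (lborel \<Otimes>\<^sub>M lborel) F"
proof (rule integrableI_bounded[OF Fm])
  have um[measurable]: "u \<in> borel_measurable lborel" and vm[measurable]: "v \<in> borel_measurable lborel"
    using u v by auto
  have "(\<integral>\<^sup>+ p. norm (F p) \<partial>(lborel \<Otimes>\<^sub>M lborel)) \<le> (\<integral>\<^sup>+ p. ennreal (u (fst p)) * ennreal (v (snd p)) \<partial>(lborel \<Otimes>\<^sub>M lborel))"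
    apply (rule nn_integral_mono)
    using b u0 v0 by (auto simp: ennreal_mult[symmetric] intro!: ennreal_leI)
  also have "\<dots> = (\<integral>\<^sup>+ x. \<integral>\<^sup>+ y. ennreal (u x) * ennreal (v y) \<partial>lborel \<partial>lborel)"
    by (subst lborel.nn_integral_fst[symmetric]) auto
  also have "\<dots> = (\<integral>\<^sup>+ x. ennreal (u x) * (\<integral>\<^sup>+ y. ennreal (v y) \<partial>lborel) \<partial>lborel)"
    by (simp add: nn_integral_cmult)
  also have "\<dots> = (\<integral>\<^sup>+ x. ennreal (u x) \<partial>lborel) * (\<integral>\<^sup>+ y. ennreal (v y) \<partial>lborel)"
    by (simp add: nn_integral_multc)
  also have "\<dots> < \<infinity>"
    using u v u0 v0 by (auto simp: integrable_iff_bounded ennreal_mult_less_top)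
  finally show "(\<integral>\<^sup>+ p. norm (F p) \<partial>(lborel \<Otimes>\<^sub>M lborel)) < \<infinity>" .
qed

definition gw :: "real \<Rightarrow> real \<Rightarrow> real" where
  "gw n y = exp (-((y/n)^2)/2)"

lemma gw_integrable: "n > 0 \<Longrightarrow> integrable lborel (gw n)"
proof -
  assume n: "n > 0"
  have i: "integrable lborel (\<lambda>y. sqrt (2*pi*n^2) * normal_density 0 n y)" using n by (intro integrable_mult_right) auto
  have e: "(\<lambda>y. sqrt (2*pi*n^2) * normal_density 0 n y) = gw n"
    using n by (auto simp: normal_density_def gw_def power_divide fun_eq_iff)
  show ?thesis using i unfolding e .
qed

lemma gw_pos: "gw n y > 0" by (simp add: gw_def)

lemma gw_measurable[measurable]: "gw n \<in> borel_measurable borel"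
  unfolding gw_def by measurable

definition psr :: "real \<Rightarrow> real \<Rightarrow> real" where
  "psr n u = n * sqrt (2*pi) * exp (-((n*u)^2)/2)"

lemma psr_measurable[measurable]: "psr n \<in> borel_measurable borel"
  unfolding psr_def by measurable

lemma psr_nonneg: "n > 0 \<Longrightarrow> psr n u \<ge> 0"
  by (simp add: psr_def)

lemma psr_normal: "n > 0 \<Longrightarrow> psr n u = 2 * pi * normal_density 0 (1/n) u"
  by (simp add: psr_def normal_density_def power_divide real_sqrt_mult real_sqrt_divide field_simps power2_eq_square)

lemma nn_integral_psr: "n > 0 \<Longrightarrow> (\<integral>\<^sup>+u. ennreal (psr n u) \<partial>lborel) = ennreal (2*pi)"
proof -
  assume n: "n > 0"
  have "(\<integral>\<^sup>+u. ennreal (psr n u) \<partial>lborel) = (\<integral>\<^sup>+u. ennreal (2*pi) * ennreal (normal_density 0 (1/n) u) \<partial>lborel)"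
    using n by (simp add: psr_normal ennreal_mult)
  also have "\<dots> = ennreal (2*pi) * (\<integral>\<^sup>+u. ennreal (normal_density 0 (1/n) u) \<partial>lborel)"
    by (simp add: nn_integral_cmult)
  also have "(\<integral>\<^sup>+u. ennreal (normal_density 0 (1/n) u) \<partial>lborel) = ennreal (integral\<^sup>L lborel (normal_density 0 (1/n)))"
    using n by (intro nn_integral_eq_integral) auto
  also have "integral\<^sup>L lborel (normal_density 0 (1/n)) = 1"
    using n by (intro integral_normal_density) simp
  finally show ?thesis by simp
qed

lemma nn_integral_psr_shift1: "n > 0 \<Longrightarrow> (\<integral>\<^sup>+k'. ennreal (psr n (k' - k)) \<partial>lborel) = ennreal (2*pi)"
  using nn_integral_real_affine[of "\<lambda>u. ennreal (psr n u)" 1 "-k"]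
  by (simp add: nn_integral_psr)

lemma nn_integral_psr_shift2: "n > 0 \<Longrightarrow> (\<integral>\<^sup>+k. ennreal (psr n (k' - k)) \<partial>lborel) = ennreal (2*pi)"
  using nn_integral_real_affine[of "\<lambda>u. ennreal (psr n u)" "-1" "k'"]
  by (simp add: nn_integral_psr)

lemma schur:
  fixes F :: "real \<Rightarrow> real"
  assumes Fm[measurable]: "F \<in> borel_measurable borel" and F0: "\<And>k. F k \<ge> 0" and n: "n > 0"
  shows "(\<integral>\<^sup>+k. ennreal (F k) * (\<integral>\<^sup>+k'. ennreal (F k' * psr n (k' - k)) \<partial>lborel) \<partial>lborel)
     \<le> ennreal (2*pi) * (\<integral>\<^sup>+k. ennreal ((F k)^2) \<partial>lborel)"
proof -
  have "(\<integral>\<^sup>+k. ennreal (F k) * (\<integral>\<^sup>+k'. ennreal (F k' * psr n (k' - k)) \<partial>lborel) \<partial>lborel)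
      = (\<integral>\<^sup>+k. (\<integral>\<^sup>+k'. ennreal (F k * F k' * psr n (k' - k)) \<partial>lborel) \<partial>lborel)"
    using F0 psr_nonneg[OF n] by (simp add: nn_integral_cmult[symmetric] ennreal_mult[symmetric] mult.assoc)
  also have "\<dots> \<le> (\<integral>\<^sup>+k. (\<integral>\<^sup>+k'. ennreal ((F k)^2/2 * psr n (k' - k)) + ennreal ((F k')^2/2 * psr n (k' - k)) \<partial>lborel) \<partial>lborel)"
  proof (intro nn_integral_mono)
    fix k k'
    have "F k * F k' \<le> (F k)^2/2 + (F k')^2/2"
      using sum_squares_bound[of "F k" "F k'"] by (simp add: power2_eq_square)
    hence "F k * F k' * psr n (k' - k) \<le> ((F k)^2/2 + (F k')^2/2) * psr n (k' - k)"
      using psr_nonneg[OF n] by (intro mult_right_mono) auto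
    thus "ennreal (F k * F k' * psr n (k' - k)) \<le> ennreal ((F k)^2/2 * psr n (k' - k)) + ennreal ((F k')^2/2 * psr n (k' - k))"
      using psr_nonneg[OF n, of "k' - k"] by (simp add: ennreal_plus[symmetric] distrib_right del: ennreal_plus)
  qed
  also have "\<dots> = (\<integral>\<^sup>+k. (\<integral>\<^sup>+k'. ennreal ((F k)^2/2 * psr n (k' - k)) \<partial>lborel) \<partial>lborel)
                + (\<integral>\<^sup>+k. (\<integral>\<^sup>+k'. ennreal ((F k')^2/2 * psr n (k' - k)) \<partial>lborel) \<partial>lborel)"
    by (simp add: nn_integral_add)
  also have "(\<integral>\<^sup>+k. (\<integral>\<^sup>+k'. ennreal ((F k)^2/2 * psr n (k' - k)) \<partial>lborel) \<partial>lborel)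
      = (\<integral>\<^sup>+k. ennreal ((F k)^2/2) * ennreal (2*pi) \<partial>lborel)"
  proof (intro nn_integral_cong)
    fix k
    have "(\<integral>\<^sup>+k'. ennreal ((F k)^2/2 * psr n (k' - k)) \<partial>lborel) = (\<integral>\<^sup>+k'. ennreal ((F k)^2/2) * ennreal (psr n (k' - k)) \<partial>lborel)"
      using psr_nonneg[OF n] by (intro nn_integral_cong, subst ennreal_mult[symmetric]) (auto simp: mult_ac)
    also have "\<dots> = ennreal ((F k)^2/2) * (\<integral>\<^sup>+k'. ennreal (psr n (k' - k)) \<partial>lborel)"
      by (rule nn_integral_cmult) measurable
    finally show "(\<integral>\<^sup>+k'. ennreal ((F k)^2/2 * psr n (k' - k)) \<partial>lborel) = ennreal ((F k)^2/2) * ennreal (2*pi)"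
      by (simp only: nn_integral_psr_shift1[OF n])
  qed
  also have "(\<integral>\<^sup>+k. (\<integral>\<^sup>+k'. ennreal ((F k')^2/2 * psr n (k' - k)) \<partial>lborel) \<partial>lborel)
      = (\<integral>\<^sup>+k'. (\<integral>\<^sup>+k. ennreal ((F k')^2/2 * psr n (k' - k)) \<partial>lborel) \<partial>lborel)"
    by (rule lborel_pair.Fubini'[of "\<lambda>k' k. ennreal ((F k')^2/2 * psr n (k' - k))"]) measurable
  also have "\<dots> = (\<integral>\<^sup>+k'. ennreal ((F k')^2/2) * ennreal (2*pi) \<partial>lborel)"
  proof (intro nn_integral_cong)
    fix k'
    have "(\<integral>\<^sup>+k. ennreal ((F k')^2/2 * psr n (k' - k)) \<partial>lborel) = (\<integral>\<^sup>+k. ennreal ((F k')^2/2) * ennreal (psr n (k' - k)) \<partial>lborel)"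
      using psr_nonneg[OF n] by (intro nn_integral_cong, subst ennreal_mult[symmetric]) (auto simp: mult_ac)
    also have "\<dots> = ennreal ((F k')^2/2) * (\<integral>\<^sup>+k. ennreal (psr n (k' - k)) \<partial>lborel)"
      by (rule nn_integral_cmult) measurable
    finally show "(\<integral>\<^sup>+k. ennreal ((F k')^2/2 * psr n (k' - k)) \<partial>lborel) = ennreal ((F k')^2/2) * ennreal (2*pi)"
      by (simp only: nn_integral_psr_shift2[OF n])
  qed
  also have "(\<integral>\<^sup>+k. ennreal ((F k)^2/2) * ennreal (2*pi) \<partial>lborel) + (\<integral>\<^sup>+k'. ennreal ((F k')^2/2) * ennreal (2*pi) \<partial>lborel)
     = (\<integral>\<^sup>+k. ennreal ((F k)^2/2) * ennreal (2*pi) + ennreal ((F k)^2/2) * ennreal (2*pi) \<partial>lborel)"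
    by (simp add: nn_integral_add)
  also have "\<dots> = (\<integral>\<^sup>+k. ennreal (2*pi) * ennreal ((F k)^2) \<partial>lborel)"
    by (intro nn_integral_cong) (simp add: ennreal_mult[symmetric] ennreal_plus[symmetric] del: ennreal_plus)
  also have "\<dots> = ennreal (2*pi) * (\<integral>\<^sup>+k. ennreal ((F k)^2) \<partial>lborel)"
    by (simp add: nn_integral_cmult)
  finally show ?thesis .
qed

lemma fub_gw:
  fixes f h :: "real \<Rightarrow> complex"
  assumes fm[measurable]: "f \<in> borel_measurable borel" and fi: "integrable lborel f"
    and hm[measurable]: "h \<in> borel_measurable borel" and hb: "\<And>y. norm (h y) \<le> Mh"
    and n: "n > 0"
  shows "(LINT y|lborel. of_real (gw n y) * h y * (LINT k|lborel. f k * cis (k*y)))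
       = (LINT k|lborel. f k * (LINT y|lborel. of_real (gw n y) * h y * cis (k*y)))"
proof -
  have Mh: "Mh \<ge> 0" using hb[of 0] norm_ge_zero[of "h 0"] by linarith
  have "(LINT y|lborel. of_real (gw n y) * h y * (LINT k|lborel. f k * cis (k*y)))
      = (LINT y|lborel. (LINT k|lborel. of_real (gw n y) * h y * (f k * cis (k*y))))"
    by simp
  also have "\<dots> = (LINT k|lborel. (LINT y|lborel. of_real (gw n y) * h y * (f k * cis (k*y))))"
  proof (rule lborel_pair.Fubini_integral)
    show "integrable (lborel \<Otimes>\<^sub>M lborel) (\<lambda>(k, y). complex_of_real (gw n y) * h y * (f k * cis (k * y)))"
    proof (rule integrable_pair_bound[where u="\<lambda>k. norm (f k)" and v="\<lambda>y. gw n y * Mh"])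
      show "(\<lambda>(k, y). complex_of_real (gw n y) * h y * (f k * cis (k * y))) \<in> borel_measurable (lborel \<Otimes>\<^sub>M lborel)"
        by measurable
      show "integrable lborel (\<lambda>k. norm (f k))" using fi by auto
      show "integrable lborel (\<lambda>y. gw n y * Mh)" using gw_integrable[OF n] by auto
      fix x y
      show "norm ((\<lambda>(k, y). complex_of_real (gw n y) * h y * (f k * cis (k * y))) (x, y)) \<le> norm (f x) * (gw n y * Mh)"
      proof -
        have g0: "gw n y \<ge> 0" using gw_pos[of n y] by simp
        have "norm ((\<lambda>(k, y). complex_of_real (gw n y) * h y * (f k * cis (k * y))) (x, y)) = gw n y * norm (h y) * norm (f x)"
          using g0 by (simp add: norm_mult)
        also have "\<dots> \<le> gw n y * Mh * norm (f x)"
          using g0 hb[of y] by (intro mult_right_mono mult_left_mono) auto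
        finally show ?thesis by (simp add: mult_ac)
      qed
    qed (auto simp: Mh less_imp_le[OF gw_pos])
  qed
  also have "\<dots> = (LINT k|lborel. f k * (LINT y|lborel. of_real (gw n y) * h y * cis (k*y)))"
    by (intro Bochner_Integration.integral_cong refl) (simp add: mult_ac)
  finally show ?thesis .
qed

lemma plancherel_le:
  fixes f :: "real \<Rightarrow> complex"
  assumes fm[measurable]: "f \<in> borel_measurable borel" and fi: "integrable lborel f"
  shows "(\<integral>\<^sup>+y. ennreal ((norm (LINT k|lborel. f k * cis (k*y)))^2) \<partial>lborel)
       \<le> ennreal (2*pi) * (\<integral>\<^sup>+k. ennreal ((norm (f k))^2) \<partial>lborel)"
proof -
  define g where "g y = (LINT k|lborel. f k * cis (k*y))" for y
  have gm[measurable]: "g \<in> borel_measurable borel"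
    unfolding g_def by measurable
  define Mf where "Mf = (LINT k|lborel. norm (f k))"
  have gb: "norm (g y) \<le> Mf" for y
    unfolding g_def Mf_def
    by (rule order_trans[OF integral_norm_bound]) (simp add: norm_mult)
  have Mf0: "Mf \<ge> 0" using gb[of 0] norm_ge_zero[of "g 0"] by linarith
  have key: "(\<integral>\<^sup>+y. ennreal ((norm (g y))^2 * gw n y) \<partial>lborel) \<le> ennreal (2*pi) * (\<integral>\<^sup>+k. ennreal ((norm (f k))^2) \<partial>lborel)"
    if n: "n > 0" for n
  proof -
    define \<Phi> where "\<Phi> k = (LINT y|lborel. of_real (gw n y) * cis (-(k*y)) * g y)" for k
    have int1: "integrable lborel (\<lambda>y. (norm (g y))^2 * gw n y)"
    proof (rule Bochner_Integration.integrable_bound)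
      show "integrable lborel (\<lambda>y. Mf^2 * gw n y)" using gw_integrable[OF n] by auto
      show "AE y in lborel. norm ((norm (g y))^2 * gw n y) \<le> norm (Mf^2 * gw n y)"
        using gb Mf0 gw_pos[of n] by (auto intro!: mult_right_mono power_mono simp: abs_mult less_imp_le)
    qed measurable
    have "(\<integral>\<^sup>+y. ennreal ((norm (g y))^2 * gw n y) \<partial>lborel) = ennreal (LINT y|lborel. (norm (g y))^2 * gw n y)"
      using gw_pos[of n] by (intro nn_integral_eq_integral int1) (auto simp: less_imp_le)
    also have "(LINT y|lborel. (norm (g y))^2 * gw n y) = norm (LINT y|lborel. of_real (gw n y) * cnj (g y) * g y)"
    proof -
      have "(LINT y|lborel. of_real (gw n y) * cnj (g y) * g y) = (LINT y|lborel. complex_of_real ((norm (g y))^2 * gw n y))"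
        by (intro Bochner_Integration.integral_cong refl) (simp add: complex_norm_square[symmetric] mult_ac del: of_real_power)
      also have "\<dots> = of_real (LINT y|lborel. (norm (g y))^2 * gw n y)" by (rule integral_complex_of_real)
      finally show ?thesis using gw_pos[of n]
        by (simp add: integral_nonneg_AE less_imp_le)
    qed
    also have "(LINT y|lborel. of_real (gw n y) * cnj (g y) * g y)
        = (LINT k|lborel. f k * (LINT y|lborel. of_real (gw n y) * cnj (g y) * cis (k*y)))"
    proof -
      have "(LINT y|lborel. of_real (gw n y) * cnj (g y) * (LINT k|lborel. f k * cis (k*y)))
        = (LINT k|lborel. f k * (LINT y|lborel. of_real (gw n y) * cnj (g y) * cis (k*y)))"
        apply (rule fub_gw[OF fm fi _ _ n, where Mh=Mf])
         apply measurable
        by (simp add: gb)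
      thus ?thesis by (simp only: g_def[symmetric])
    qed
    also have "\<dots> = (LINT k|lborel. f k * cnj (\<Phi> k))"
    proof (intro Bochner_Integration.integral_cong refl arg_cong2[where f="(*)"])
      fix k
      have "cnj (\<Phi> k) = (LINT y|lborel. cnj (of_real (gw n y) * cis (-(k*y)) * g y))"
        unfolding \<Phi>_def by (rule Bochner_Integration.integral_cnj[symmetric])
      also have "\<dots> = (LINT y|lborel. of_real (gw n y) * cnj (g y) * cis (k*y))"
        by (intro Bochner_Integration.integral_cong refl) (simp add: cis_cnj mult_ac)
      finally show "(LINT y|lborel. of_real (gw n y) * cnj (g y) * cis (k*y)) = cnj (\<Phi> k)" by simp
    qed
    finally have eq1: "(\<integral>\<^sup>+y. ennreal ((norm (g y))^2 * gw n y) \<partial>lborel) = ennreal (norm (LINT k|lborel. f k * cnj (\<Phi> k)))" .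
    have Phi: "\<Phi> k = (LINT k'|lborel. f k' * of_real (psr n (k' - k)))" for k
    proof -
      have "\<Phi> k = (LINT k'|lborel. f k' * (LINT y|lborel. of_real (gw n y) * cis (-(k*y)) * cis (k'*y)))"
        unfolding \<Phi>_def g_def
        by (rule fub_gw[OF fm fi _ _ n]) auto
      also have "\<dots> = (LINT k'|lborel. f k' * of_real (psr n (k' - k)))"
      proof (intro Bochner_Integration.integral_cong refl arg_cong2[where f="(*)"])
        fix k'
        have "(LINT y|lborel. of_real (gw n y) * cis (-(k*y)) * cis (k'*y))
            = (LINT y|lborel. complex_of_real (exp (-((y/n)^2)/2)) * cis ((k'-k)*y))"
          by (intro Bochner_Integration.integral_cong refl) (simp add: gw_def mult.assoc cis_mult algebra_simps)
        also have "\<dots> = of_real (psr n (k' - k))"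
          unfolding psr_def by (rule gauss_ft[OF n])
        finally show "(LINT y|lborel. of_real (gw n y) * cis (-(k*y)) * cis (k'*y)) = of_real (psr n (k' - k))" .
      qed
      finally show ?thesis .
    qed
    have "ennreal (norm (LINT k|lborel. f k * cnj (\<Phi> k))) \<le> (\<integral>\<^sup>+k. norm (f k * cnj (\<Phi> k)) \<partial>lborel)"
      by (rule norm_integral_le_nn)
    also have "\<dots> \<le> (\<integral>\<^sup>+k. ennreal (norm (f k)) * (\<integral>\<^sup>+k'. ennreal (norm (f k') * psr n (k' - k)) \<partial>lborel) \<partial>lborel)"
    proof (intro nn_integral_mono)
      fix k
      have "ennreal (norm (\<Phi> k)) \<le> (\<integral>\<^sup>+k'. norm (f k' * of_real (psr n (k' - k))) \<partial>lborel)"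
        unfolding Phi by (rule norm_integral_le_nn)
      also have "\<dots> = (\<integral>\<^sup>+k'. ennreal (norm (f k') * psr n (k' - k)) \<partial>lborel)"
        using psr_nonneg[OF n] by (intro nn_integral_cong) (simp add: norm_mult)
      finally have "ennreal (norm (\<Phi> k)) \<le> (\<integral>\<^sup>+k'. ennreal (norm (f k') * psr n (k' - k)) \<partial>lborel)" .
      then show "ennreal (norm (f k * cnj (\<Phi> k))) \<le> ennreal (norm (f k)) * (\<integral>\<^sup>+k'. ennreal (norm (f k') * psr n (k' - k)) \<partial>lborel)"
        by (simp add: norm_mult ennreal_mult mult_left_mono)
    qed
    also have "\<dots> \<le> ennreal (2*pi) * (\<integral>\<^sup>+k. ennreal ((norm (f k))^2) \<partial>lborel)"
      by (rule schur[OF _ _ n]) auto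
    finally show ?thesis unfolding eq1 .
  qed
  have "(\<integral>\<^sup>+y. ennreal ((norm (g y))^2) \<partial>lborel) = (\<integral>\<^sup>+y. (SUP m. ennreal ((norm (g y))^2 * gw (real (Suc m)) y)) \<partial>lborel)"
  proof (intro nn_integral_cong)
    fix y
    have inc: "incseq (\<lambda>m. ennreal ((norm (g y))^2 * gw (real (Suc m)) y))"
    proof (intro incseq_SucI ennreal_leI mult_left_mono)
      fix m :: nat
      have "(y / real (Suc (Suc m)))^2 \<le> (y / real (Suc m))^2"
        by (auto simp: power_divide intro!: divide_left_mono mult_pos_pos)
      thus "gw (real (Suc m)) y \<le> gw (real (Suc (Suc m))) y"
        unfolding gw_def by simp
    qed simp
    have lim: "(\<lambda>m. ennreal ((norm (g y))^2 * gw (real (Suc m)) y)) \<longlonglongrightarrow> ennreal ((norm (g y))^2 * 1)"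
    proof (intro tendsto_ennrealI tendsto_mult tendsto_const)
      have "(\<lambda>m. y / real (Suc m)) \<longlonglongrightarrow> 0"
        using LIMSEQ_Suc[OF lim_const_over_n[of y]] by simp
      hence "(\<lambda>m. exp (-((y / real (Suc m))^2)/2)) \<longlonglongrightarrow> exp (-((0::real)^2)/2)"
        by (intro tendsto_intros) auto
      thus "(\<lambda>m. gw (real (Suc m)) y) \<longlonglongrightarrow> 1" unfolding gw_def by simp
    qed
    show "ennreal ((norm (g y))^2) = (SUP m. ennreal ((norm (g y))^2 * gw (real (Suc m)) y))"
      using LIMSEQ_unique[OF LIMSEQ_SUP[OF inc] lim] by simp
  qed
  also have "\<dots> = (SUP m. (\<integral>\<^sup>+y. ennreal ((norm (g y))^2 * gw (real (Suc m)) y) \<partial>lborel))"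
  proof (rule nn_integral_monotone_convergence_SUP)
    show "incseq (\<lambda>m y. ennreal ((norm (g y))^2 * gw (real (Suc m)) y))"
    proof (intro incseq_SucI le_funI ennreal_leI mult_left_mono)
      fix m :: nat and y
      have "(y / real (Suc (Suc m)))^2 \<le> (y / real (Suc m))^2"
        by (auto simp: power_divide intro!: divide_left_mono mult_pos_pos)
      thus "gw (real (Suc m)) y \<le> gw (real (Suc (Suc m))) y"
        unfolding gw_def by simp
    qed simp
  qed measurable
  also have "\<dots> \<le> ennreal (2*pi) * (\<integral>\<^sup>+k. ennreal ((norm (f k))^2) \<partial>lborel)"
    by (intro SUP_least key) simp
  finally show ?thesis unfolding g_def .
qed

lemma mvt_bound:
  fixes f f' :: "real \<Rightarrow> 'a::real_normed_vector"
  assumes der: "\<And>x. lo < x \<Longrightarrow> x < hi \<Longrightarrow> (f has_vector_derivative f' x) (at x)"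
    and bnd: "\<And>x. lo < x \<Longrightarrow> x < hi \<Longrightarrow> norm (f' x) \<le> B"
    and s: "lo < s" "s < hi" and t: "lo < t" "t < hi"
  shows "norm (f t - f s) \<le> B * \<bar>t - s\<bar>"
proof -
  have main: "norm (f v - f u) \<le> B * (v - u)" if "lo < u" "u < v" "v < hi" for u v
  proof -
    have cont: "continuous_on {u..v} f"
      using that by (intro continuous_at_imp_continuous_on ballI has_vector_derivative_continuous[OF der]) auto
    have "norm (f v - f u) \<le> B * v - B * u"
      by (rule differentiable_bound_general[where \<phi>="\<lambda>x. B * x" and \<phi>'="\<lambda>x. B" and f'=f'])
         (use that der bnd cont in \<open>auto intro!: derivative_eq_intros continuous_intros\<close>)
    thus ?thesis by (simp add: algebra_simps)
  qed
  show ?thesis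
  proof (cases s t rule: linorder_cases)
    case less thus ?thesis using main[of s t] s t by simp
  next
    case equal thus ?thesis by simp
  next
    case greater thus ?thesis using main[of t s] s t by (simp add: norm_minus_commute)
  qed
qed

lemma deriv_under_int:
  fixes F F' :: "real \<Rightarrow> real \<Rightarrow> complex" and w :: "real \<Rightarrow> real"
  assumes t0: "lo < t0" "t0 < hi"
    and der: "\<And>t k. lo < t \<Longrightarrow> t < hi \<Longrightarrow> ((\<lambda>t. F t k) has_vector_derivative F' t k) (at t)"
    and Fm: "\<And>t. lo < t \<Longrightarrow> t < hi \<Longrightarrow> F t \<in> borel_measurable borel"
    and F'm: "F' t0 \<in> borel_measurable borel"
    and Fi: "integrable lborel (F t0)"
    and wb: "\<And>t k. lo < t \<Longrightarrow> t < hi \<Longrightarrow> norm (F' t k) \<le> w k"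
    and wi: "integrable lborel w"
  shows "((\<lambda>t. LINT k|lborel. F t k) has_vector_derivative (LINT k|lborel. F' t0 k)) (at t0)"
proof -
  have wm[measurable]: "w \<in> borel_measurable borel" using wi by auto
  have w0: "w k \<ge> 0" for k using wb[OF t0, of k] norm_ge_zero[of "F' t0 k"] by linarith
  have F'i: "integrable lborel (F' t0)"
    by (rule Bochner_Integration.integrable_bound[OF wi]) (use F'm wb t0 w0 in auto)
  have diffb: "norm (F t k - F s k) \<le> w k * \<bar>t - s\<bar>" if "lo < s" "s < hi" "lo < t" "t < hi" for s t k
    by (rule mvt_bound[where f'="\<lambda>t. F' t k"]) (use that der wb in auto)
  have Fit: "integrable lborel (F t)" if "lo < t" "t < hi" for t
  proof (rule Bochner_Integration.integrable_bound[where f="\<lambda>k. norm (F t0 k) + w k * \<bar>t - t0\<bar>"])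
    show "integrable lborel (\<lambda>k. norm (F t0 k) + w k * \<bar>t - t0\<bar>)"
      using Fi wi by auto
    show "F t \<in> borel_measurable lborel" using Fm[OF that] by simp
    show "AE k in lborel. norm (F t k) \<le> norm (norm (F t0 k) + w k * \<bar>t - t0\<bar>)"
    proof (intro AE_I2)
      fix k
      have "norm (F t k) \<le> norm (F t0 k) + norm (F t k - F t0 k)"
        by (metis norm_triangle_sub)
      also have "\<dots> \<le> norm (F t0 k) + w k * \<bar>t - t0\<bar>"
        using diffb[of t0 t k] that t0 by simp
      also have "\<dots> \<le> norm (norm (F t0 k) + w k * \<bar>t - t0\<bar>)" by simp
      finally show "norm (F t k) \<le> norm (norm (F t0 k) + w k * \<bar>t - t0\<bar>)" .
    qed
  qed
  define D where "D = (LINT k|lborel. F' t0 k)"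
  define q where "q h k = (1/h) *\<^sub>R (F (t0 + h) k - F t0 k - h *\<^sub>R F' t0 k)" for h k
  define r where "r = min (t0 - lo) (hi - t0)"
  have r: "r > 0" using t0 by (simp add: r_def)
  have inU: "lo < t0 + h" "t0 + h < hi" if "\<bar>h\<bar> < r" for h
    using that by (auto simp: r_def)
  have qb: "norm (q h k) \<le> 2 * w k" if "\<bar>h\<bar> < r" "h \<noteq> 0" for h k
  proof -
    have "norm (F (t0 + h) k - F t0 k - h *\<^sub>R F' t0 k) \<le> norm (F (t0 + h) k - F t0 k) + norm (h *\<^sub>R F' t0 k)"
      by (rule norm_triangle_ineq4)
    also have "\<dots> \<le> w k * \<bar>h\<bar> + \<bar>h\<bar> * w k"
      using diffb[of t0 "t0 + h" k] inU[OF that(1)] t0 wb[OF t0, of k]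
      by (intro add_mono) (auto intro!: mult_left_mono)
    finally show ?thesis using that unfolding q_def
      by (simp add: divide_simps abs_mult) (simp add: algebra_simps)
  qed
  have qlim: "((\<lambda>h. q h k) \<longlongrightarrow> 0) (at 0)" for k
  proof -
    have d: "((\<lambda>t. F t k) has_vector_derivative F' t0 k) (at t0)" using der t0 by auto
    hence "((\<lambda>h. norm (F (t0 + h) k - F t0 k - h *\<^sub>R F' t0 k) / norm h) \<longlongrightarrow> 0) (at 0)"
      unfolding has_vector_derivative_def has_derivative_at by simp
    moreover have "norm (q h k) = norm (F (t0 + h) k - F t0 k - h *\<^sub>R F' t0 k) / norm h" for h
      unfolding q_def by (simp add: divide_simps)
    ultimately have "((\<lambda>h. norm (q h k)) \<longlongrightarrow> 0) (at 0)" by simp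
    thus ?thesis by (simp add: tendsto_norm_zero_iff)
  qed
  have intlim: "((\<lambda>h. LINT k|lborel. q h k) \<longlongrightarrow> 0) (at 0)"
    unfolding tendsto_at_iff_sequentially comp_def
  proof (intro allI impI)
    fix X :: "nat \<Rightarrow> real" assume X0: "\<forall>i. X i \<in> UNIV - {0}" and X: "X \<longlonglongrightarrow> 0"
    obtain N where N: "\<And>i. i \<ge> N \<Longrightarrow> \<bar>X i\<bar> < r"
      using X r unfolding LIMSEQ_def by (auto simp: dist_real_def)
    have "(\<lambda>i. LINT k|lborel. q (X (i + N)) k) \<longlonglongrightarrow> (LINT k|(lborel::real measure). (0::complex))"
    proof (rule Bochner_Integration.integral_dominated_convergence[where w="\<lambda>k. 2 * w k" and s="\<lambda>i. q (X (i + N))" and f="\<lambda>k. 0"])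
      show "(\<lambda>k. 0::complex) \<in> borel_measurable lborel" by simp
      show "\<And>i. (\<lambda>k. q (X (i + N)) k) \<in> borel_measurable lborel"
        unfolding q_def using Fm inU N F'm t0
        by (intro borel_measurable_scaleR borel_measurable_diff) auto
      show "integrable lborel (\<lambda>k. 2 * w k)" using wi by simp
      show "AE k in lborel. (\<lambda>i. q (X (i + N)) k) \<longlonglongrightarrow> 0"
      proof (intro AE_I2)
        fix k
        have "(\<lambda>i. X (i + N)) \<longlonglongrightarrow> 0" using X by (rule LIMSEQ_ignore_initial_segment)
        moreover have "\<forall>i. X (i + N) \<noteq> 0" using X0 by auto
        ultimately show "(\<lambda>i. q (X (i + N)) k) \<longlonglongrightarrow> 0"
          using qlim[of k] unfolding tendsto_at_iff_sequentially comp_def by auto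
      qed
      show "\<And>i. AE k in lborel. norm (q (X (i + N)) k) \<le> 2 * w k"
        using qb N X0 by auto
    qed
    thus "(\<lambda>i. LINT k|lborel. q (X i) k) \<longlonglongrightarrow> 0"
      by (simp add: LIMSEQ_offset[where k=N])
  qed
  have G: "norm ((LINT k|lborel. F (t0 + h) k) - (LINT k|lborel. F t0 k) - h *\<^sub>R D) / norm h
      = norm (LINT k|lborel. q h k)" if "\<bar>h\<bar> < r" for h
  proof -
    have i1: "integrable lborel (F (t0 + h))" using Fit inU[OF that] by auto
    have "(LINT k|lborel. F (t0 + h) k) - (LINT k|lborel. F t0 k) - h *\<^sub>R D
        = (LINT k|lborel. F (t0 + h) k - F t0 k - h *\<^sub>R F' t0 k)"
      unfolding D_def using i1 Fi F'i by simp
    hence "(1/h) *\<^sub>R ((LINT k|lborel. F (t0 + h) k) - (LINT k|lborel. F t0 k) - h *\<^sub>R D)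
        = (LINT k|lborel. q h k)"
      unfolding q_def by simp
    hence "norm ((1/h) *\<^sub>R ((LINT k|lborel. F (t0 + h) k) - (LINT k|lborel. F t0 k) - h *\<^sub>R D))
        = norm (LINT k|lborel. q h k)" by simp
    thus ?thesis by (simp add: divide_simps)
  qed
  have "((\<lambda>h. norm ((LINT k|lborel. F (t0 + h) k) - (LINT k|lborel. F t0 k) - h *\<^sub>R D) / norm h) \<longlongrightarrow> 0) (at 0)"
  proof (rule Lim_transform_eventually)
    show "((\<lambda>h. norm (LINT k|lborel. q h k)) \<longlongrightarrow> 0) (at 0)"
      using intlim by (simp add: tendsto_norm_zero_iff)
    show "\<forall>\<^sub>F h in at 0. norm (LINT k|lborel. q h k) = norm ((LINT k|lborel. F (t0 + h) k) - (LINT k|lborel. F t0 k) - h *\<^sub>R D) / norm h"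
      unfolding eventually_at using r G by (intro exI[of _ r]) auto
  qed
  thus ?thesis
    unfolding has_vector_derivative_def has_derivative_at D_def
    by (simp add: bounded_linear_scaleR_left)
qed

definition cc1 where
  "cc1 a beta lam rho delta k = (if k = 0 then 0 else
     A_k a beta lam rho delta k * (chi_c beta lam delta + 1) / (2 * chi_c beta lam delta))"
definition cc2 where
  "cc2 a beta lam rho delta k = (if k = 0 then 0 else
     A_k a beta lam rho delta k * (chi_c beta lam delta - 1) / (2 * chi_c beta lam delta))"

lemma eps_c_nz: "eps_c beta lam delta \<noteq> 0"
  by (simp add: eps_c_def complex_eq_iff)

lemma eps_s_nz: "eps_s delta \<noteq> 0"
  by (simp add: eps_s_def complex_eq_iff)

lemma chi_nz: "chi_c beta lam delta \<noteq> 0"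
  using eps_c_nz eps_s_nz by (simp add: chi_c_def)

lemma Vhat_eq:
  assumes "0 \<le> x" "x \<le> a"
  shows "V_hat a beta lam rho delta x k =
    cc1 a beta lam rho delta k * of_real (exp (\<bar>k\<bar> * x)) + cc2 a beta lam rho delta k * of_real (exp (- \<bar>k\<bar> * x))"
  using assms chi_nz[of beta lam delta] by (auto simp: V_hat_def cc1_def cc2_def Let_def field_simps)

lemma ratio1: "(chi_c beta lam delta + 1) / (2 * chi_c beta lam delta) = (eps_s delta + eps_c beta lam delta) / (2 * eps_s delta)"
  using eps_c_nz[of beta lam delta] eps_s_nz[of delta]
  by (simp add: chi_c_def field_simps)

lemma ratio2: "(chi_c beta lam delta - 1) / (2 * chi_c beta lam delta) = (eps_s delta - eps_c beta lam delta) / (2 * eps_s delta)"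
  using eps_c_nz[of beta lam delta] eps_s_nz[of delta]
  by (simp add: chi_c_def field_simps)

lemma norm_eps_s_ge: "norm (eps_s delta) \<ge> 1"
  by (simp add: eps_s_def cmod_def)

lemma norm_eps_s_le: "\<bar>delta\<bar> \<le> 1 \<Longrightarrow> norm (eps_s delta) \<le> 2"
proof -
  assume "\<bar>delta\<bar> \<le> 1"
  hence "\<bar>delta\<bar>^2 \<le> 1^2" by (intro power_mono) auto
  hence "delta^2 \<le> 1" by simp
  hence "sqrt (1 + delta^2) \<le> sqrt (2^2)" by (intro real_sqrt_le_mono) simp
  hence "sqrt (1 + delta^2) \<le> 2" by simp
  thus ?thesis by (simp add: eps_s_def cmod_def)
qed

lemma norm_sum_eps: "mu beta lam delta \<ge> - delta \<Longrightarrow> norm (eps_s delta + eps_c beta lam delta) = delta + mu beta lam delta"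
  by (simp add: eps_s_def eps_c_def cmod_def)

lemma norm_diff_eps: "norm (eps_s delta - eps_c beta lam delta) \<le> 2 + \<bar>delta - mu beta lam delta\<bar>"
proof -
  have "eps_s delta - eps_c beta lam delta = Complex (-2) 0 + Complex 0 (delta - mu beta lam delta)"
    by (simp add: eps_s_def eps_c_def complex_eq_iff)
  also have "norm \<dots> \<le> norm (Complex (-2) 0) + norm (Complex 0 (delta - mu beta lam delta))"
    by (rule norm_triangle_ineq)
  also have "\<dots> = 2 + \<bar>delta - mu beta lam delta\<bar>" by (simp add: cmod_def)
  finally show ?thesis .
qed

lemma D_alg:
  fixes es ec E e K :: complex
  assumes es: "es \<noteq> 0" and ec: "ec \<noteq> 0" and eE: "e * E = 1"
  shows "e * (K * (((es/ec) + 1) * E + ((es/ec) - 1) * e) / (2 * (es/ec))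
          + K * es / (2 * (es/ec)) * (((es/ec) + 1) * E - ((es/ec) - 1) * e))
       = K / (2 * es) * ((es + ec) * (1 + es) + (es - ec) * (1 - es) * (e * e))"
proof -
  have "e * (K * (((es/ec) + 1) * E + ((es/ec) - 1) * e) / (2 * (es/ec))
          + K * es / (2 * (es/ec)) * (((es/ec) + 1) * E - ((es/ec) - 1) * e))
      = K / (2 * es) * ((es + ec) * (e * E) * (1 + es) + (es - ec) * (1 - es) * (e * e))"
    using es ec by (simp add: field_simps)
  thus ?thesis using eE by simp
qed

lemma ReB:
  fixes q :: real
  shows "Re ((eps_s delta + eps_c beta lam delta) * (1 + eps_s delta)
          + (eps_s delta - eps_c beta lam delta) * (1 - eps_s delta) * of_real q)
       = - delta * (delta + mu beta lam delta) + q * (-4 + delta^2 - delta * mu beta lam delta)"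
  by (simp add: eps_s_def eps_c_def algebra_simps power2_eq_square)

lemma D_eq:
  fixes k :: real
  defines "K \<equiv> \<bar>k\<bar>"
  shows "of_real (exp (- K * a)) * (of_real K * psi_p a beta lam delta k + psi_m a beta lam delta k)
    = of_real K / (2 * eps_s delta) * ((eps_s delta + eps_c beta lam delta) * (1 + eps_s delta)
        + (eps_s delta - eps_c beta lam delta) * (1 - eps_s delta) * of_real ((exp (- K * a))^2))"
proof -
  have eE: "complex_of_real (exp (- K * a)) * complex_of_real (exp (K * a)) = 1"
    by (simp flip: of_real_mult exp_add)
  have "complex_of_real ((exp (- K * a))^2) = of_real (exp (- K * a)) * of_real (exp (- K * a))"
    by (simp add: power2_eq_square)
  moreover have "exp (- \<bar>k\<bar> * a) = exp (- K * a)" by (simp add: K_def)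
  ultimately show ?thesis
    using D_alg[OF eps_s_nz eps_c_nz eE, of "of_real K" delta beta lam]
    unfolding psi_p_def psi_m_def Let_def chi_c_def K_def
    by (simp add: mult.assoc)
qed

lemma D_lower:
  fixes k :: real
  assumes d: "0 < delta" "delta \<le> 1" and m: "mu beta lam delta \<ge> 0" and k: "k \<noteq> 0"
  shows "norm (of_real (exp (- \<bar>k\<bar> * a)) * (of_real \<bar>k\<bar> * psi_p a beta lam delta k + psi_m a beta lam delta k))
     \<ge> \<bar>k\<bar> * (delta * (delta + mu beta lam delta) + 3 * (exp (- \<bar>k\<bar> * a))^2) / 4"
proof -
  define q where "q = (exp (- \<bar>k\<bar> * a))^2"
  define m where "m = mu beta lam delta"
  define B where "B = (eps_s delta + eps_c beta lam delta) * (1 + eps_s delta)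
        + (eps_s delta - eps_c beta lam delta) * (1 - eps_s delta) * of_real q"
  have q0: "q \<ge> 0" by (simp add: q_def)
  have ReB': "Re B = - delta * (delta + m) + q * (-4 + delta^2 - delta * m)"
    unfolding B_def m_def by (rule ReB)
  have "delta^2 \<le> 1" using d by (simp add: power_le_one)
  moreover have "delta * m \<ge> 0" using d m by (simp add: m_def)
  ultimately have "4 - delta^2 + delta * m \<ge> 3" by linarith
  hence "q * (4 - delta^2 + delta * m) \<ge> q * 3" using q0 by (intro mult_left_mono) auto
  hence low: "- Re B \<ge> delta * (delta + m) + 3 * q" unfolding ReB' by (simp add: algebra_simps)
  have nB: "norm B \<ge> delta * (delta + m) + 3 * q"
    using low abs_Re_le_cmod[of B] by linarith
  have pos: "delta * (delta + m) + 3 * q \<ge> 0" using d m q0 by (simp add: m_def)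
  have es: "norm (eps_s delta) \<le> 2" "norm (eps_s delta) > 0"
    using norm_eps_s_le[of delta] d eps_s_nz[of delta] by auto
  have "norm (of_real (exp (- \<bar>k\<bar> * a)) * (of_real \<bar>k\<bar> * psi_p a beta lam delta k + psi_m a beta lam delta k))
      = \<bar>k\<bar> * norm B / (2 * norm (eps_s delta))"
    unfolding B_def q_def using D_eq[of k a beta lam delta]
    by (simp add: norm_mult norm_divide)
  also have "\<dots> \<ge> \<bar>k\<bar> * (delta * (delta + m) + 3 * q) / 4"
  proof -
    have "\<bar>k\<bar> * (delta * (delta + m) + 3 * q) / 4 \<le> \<bar>k\<bar> * norm B / 4"
      using nB by (intro divide_right_mono mult_left_mono) auto
    also have "\<dots> \<le> \<bar>k\<bar> * norm B / (2 * norm (eps_s delta))"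
      using es by (intro divide_left_mono) auto
    finally show ?thesis .
  qed
  finally show ?thesis by (simp add: q_def m_def)
qed

lemma A_bound:
  fixes k :: real
  assumes d: "0 < delta" "delta \<le> 1" and m: "mu beta lam delta \<ge> 0" and k: "k \<noteq> 0"
  shows "norm (A_k a beta lam rho delta k)
     \<le> 4 * norm (I_k rho k) / (\<bar>k\<bar> * (delta * (delta + mu beta lam delta) + 3 * (exp (- \<bar>k\<bar> * a))^2))"
proof -
  define L where "L = \<bar>k\<bar> * (delta * (delta + mu beta lam delta) + 3 * (exp (- \<bar>k\<bar> * a))^2) / 4"
  have L: "L > 0" unfolding L_def using d m k by (auto intro!: mult_pos_pos add_pos_nonneg divide_pos_pos)
  have "norm (A_k a beta lam rho delta k) = norm (I_k rho k) / norm (of_real (exp (- \<bar>k\<bar> * a)) * (of_real \<bar>k\<bar> * psi_p a beta lam delta k + psi_m a beta lam delta k))"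
    by (simp add: A_k_def norm_divide)
  also have "\<dots> \<le> norm (I_k rho k) / L"
  proof -
    have DL: "norm (of_real (exp (- \<bar>k\<bar> * a)) * (of_real \<bar>k\<bar> * psi_p a beta lam delta k + psi_m a beta lam delta k)) \<ge> L"
      using D_lower[OF d m k, of a] unfolding L_def by simp
    show ?thesis
      by (rule divide_left_mono[OF DL]) (use L DL in \<open>auto intro!: mult_pos_pos\<close>)
  qed
  also have "\<dots> = 4 * norm (I_k rho k) / (\<bar>k\<bar> * (delta * (delta + mu beta lam delta) + 3 * (exp (- \<bar>k\<bar> * a))^2))"
    unfolding L_def by simp
  finally show ?thesis .
qed

lemma cc1_bound:
  assumes d: "0 < delta" and m: "mu beta lam delta \<ge> 0"
  shows "norm (cc1 a beta lam rho delta k) \<le> norm (A_k a beta lam rho delta k) * (delta + mu beta lam delta) / 2"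
proof (cases "k = 0")
  case False
  have "cc1 a beta lam rho delta k = A_k a beta lam rho delta k * ((eps_s delta + eps_c beta lam delta) / (2 * eps_s delta))"
    using False unfolding cc1_def ratio1[symmetric] by (simp only: if_False times_divide_eq_right)
  hence "norm (cc1 a beta lam rho delta k) = norm (A_k a beta lam rho delta k) * norm (eps_s delta + eps_c beta lam delta) / (2 * norm (eps_s delta))"
    by (simp add: norm_mult norm_divide)
  also have "\<dots> \<le> norm (A_k a beta lam rho delta k) * (delta + mu beta lam delta) / 2"
  proof -
    have N: "norm (eps_s delta + eps_c beta lam delta) = delta + mu beta lam delta"
      using d m by (intro norm_sum_eps) auto
    have e: "norm (eps_s delta) \<ge> 1" by (rule norm_eps_s_ge)
    have "norm (A_k a beta lam rho delta k) * (delta + mu beta lam delta) / (2 * norm (eps_s delta))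
        \<le> norm (A_k a beta lam rho delta k) * (delta + mu beta lam delta) / 2"
      by (rule divide_left_mono) (use e d m in auto)
    thus ?thesis unfolding N .
  qed
  finally show ?thesis .
qed (use d m in \<open>auto simp: cc1_def\<close>)

lemma cc2_bound:
  shows "norm (cc2 a beta lam rho delta k) \<le> norm (A_k a beta lam rho delta k) * (2 + \<bar>delta - mu beta lam delta\<bar>) / 2"
proof (cases "k = 0")
  case False
  have "cc2 a beta lam rho delta k = A_k a beta lam rho delta k * ((eps_s delta - eps_c beta lam delta) / (2 * eps_s delta))"
    using False unfolding cc2_def ratio2[symmetric] by (simp only: if_False times_divide_eq_right)
  hence "norm (cc2 a beta lam rho delta k) = norm (A_k a beta lam rho delta k) * norm (eps_s delta - eps_c beta lam delta) / (2 * norm (eps_s delta))"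
    by (simp add: norm_mult norm_divide)
  also have "\<dots> \<le> norm (A_k a beta lam rho delta k) * (2 + \<bar>delta - mu beta lam delta\<bar>) / 2"
  proof -
    have N: "norm (eps_s delta - eps_c beta lam delta) \<le> 2 + \<bar>delta - mu beta lam delta\<bar>"
      by (rule norm_diff_eps)
    have e: "norm (eps_s delta) \<ge> 1" by (rule norm_eps_s_ge)
    show ?thesis
      by (rule divide_mono) (use e N in \<open>auto intro: mult_left_mono\<close>)
  qed
  finally show ?thesis .
qed (auto simp: cc2_def)

lemma rho_comp:
  fixes rho :: "real \<Rightarrow> real \<Rightarrow> real"
  assumes rm: "(\<lambda>(x, y). rho x y) \<in> borel_measurable (lborel :: (real \<times> real) measure)"
    and f: "f \<in> borel_measurable M" and g: "g \<in> borel_measurable M"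
  shows "(\<lambda>x. rho (f x) (g x)) \<in> borel_measurable M"
proof -
  have "(\<lambda>(x, y). rho x y) \<in> borel_measurable (borel \<Otimes>\<^sub>M borel)"
    using rm by (simp add: borel_prod)
  from measurable_compose[OF measurable_Pair[OF f g] this] show ?thesis by simp
qed

lemma I_k_meas:
  fixes rho :: "real \<Rightarrow> real \<Rightarrow> real"
  assumes rm: "(\<lambda>(x, y). rho x y) \<in> borel_measurable (lborel :: (real \<times> real) measure)"
  shows "(\<lambda>k. I_k rho k) \<in> borel_measurable borel"
proof -
  note rc[measurable (raw)] = rho_comp[OF rm]
  show ?thesis
    unfolding I_k_def rho_hat_def set_lebesgue_integral_def by measurable
qed

lemma A_k_meas:
  fixes rho :: "real \<Rightarrow> real \<Rightarrow> real"
  assumes rm: "(\<lambda>(x, y). rho x y) \<in> borel_measurable (lborel :: (real \<times> real) measure)"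
  shows "(\<lambda>k. A_k a beta lam rho delta k) \<in> borel_measurable borel"
proof -
  note [measurable] = I_k_meas[OF rm]
  show ?thesis
    unfolding A_k_def psi_p_def psi_m_def Let_def by measurable
qed

lemma cc_meas:
  fixes rho :: "real \<Rightarrow> real \<Rightarrow> real"
  assumes rm: "(\<lambda>(x, y). rho x y) \<in> borel_measurable (lborel :: (real \<times> real) measure)"
  shows "(\<lambda>k. cc1 a beta lam rho delta k) \<in> borel_measurable borel"
    "(\<lambda>k. cc2 a beta lam rho delta k) \<in> borel_measurable borel"
proof -
  note [measurable] = A_k_meas[OF rm]
  show "(\<lambda>k. cc1 a beta lam rho delta k) \<in> borel_measurable borel"
    unfolding cc1_def by measurable
  show "(\<lambda>k. cc2 a beta lam rho delta k) \<in> borel_measurable borel"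
    unfolding cc2_def by measurable
qed

lemma norm_integral_le_nn':
  fixes f :: "'a \<Rightarrow> 'b::{banach, second_countable_topology}"
  shows "ennreal (norm (integral\<^sup>L M f)) \<le> (\<integral>\<^sup>+x. norm (f x) \<partial>M)"
  by (cases "integrable M f") (auto simp: integral_norm_bound_ennreal not_integrable_integral_eq)

lemma rho_hat_bound:
  "ennreal (norm (rho_hat rho s k)) \<le> (\<integral>\<^sup>+y. ennreal \<bar>rho s y\<bar> \<partial>lborel)"
proof -
  have "ennreal (norm (rho_hat rho s k)) \<le> (\<integral>\<^sup>+y. norm (of_real (rho s y) * cis (- (k * y))) \<partial>lborel)"
    unfolding rho_hat_def by (rule norm_integral_le_nn')
  also have "\<dots> = (\<integral>\<^sup>+y. ennreal \<bar>rho s y\<bar> \<partial>lborel)"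
    by (simp add: norm_mult)
  finally show ?thesis .
qed

lemma I_bound:
  fixes rho :: "real \<Rightarrow> real \<Rightarrow> real"
  assumes rm: "(\<lambda>(x, y). rho x y) \<in> borel_measurable (lborel :: (real \<times> real) measure)"
  shows "ennreal (norm (I_k rho k)) \<le> ennreal (exp (- \<bar>k\<bar> * d0 rho)) * (\<integral>\<^sup>+s. \<integral>\<^sup>+y. ennreal \<bar>rho s y\<bar> \<partial>lborel \<partial>lborel)"
proof -
  note rc[measurable (raw)] = rho_comp[OF rm]
  have "ennreal (norm (I_k rho k)) \<le> (\<integral>\<^sup>+s. norm (indicator {d0 rho..d1 rho} s *\<^sub>R (rho_hat rho s k * of_real (exp (- \<bar>k\<bar> * s)))) \<partial>lborel)"
    unfolding I_k_def set_lebesgue_integral_def by (rule norm_integral_le_nn')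
  also have "\<dots> \<le> (\<integral>\<^sup>+s. ennreal (exp (- \<bar>k\<bar> * d0 rho)) * (\<integral>\<^sup>+y. ennreal \<bar>rho s y\<bar> \<partial>lborel) \<partial>lborel)"
  proof (intro nn_integral_mono)
    fix s
    show "ennreal (norm (indicator {d0 rho..d1 rho} s *\<^sub>R (rho_hat rho s k * of_real (exp (- \<bar>k\<bar> * s)))))
        \<le> ennreal (exp (- \<bar>k\<bar> * d0 rho)) * (\<integral>\<^sup>+y. ennreal \<bar>rho s y\<bar> \<partial>lborel)"
    proof (cases "s \<in> {d0 rho..d1 rho}")
      case True
      have e: "exp (- \<bar>k\<bar> * s) \<le> exp (- \<bar>k\<bar> * d0 rho)"
        using True by (auto intro!: mult_left_mono)
      have "ennreal (norm (indicator {d0 rho..d1 rho} s *\<^sub>R (rho_hat rho s k * of_real (exp (- \<bar>k\<bar> * s)))))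
          = ennreal (exp (- \<bar>k\<bar> * s)) * ennreal (norm (rho_hat rho s k))"
        using True by (simp add: norm_mult ennreal_mult mult.commute)
      also have "\<dots> \<le> ennreal (exp (- \<bar>k\<bar> * d0 rho)) * (\<integral>\<^sup>+y. ennreal \<bar>rho s y\<bar> \<partial>lborel)"
        using e by (intro mult_mono rho_hat_bound) auto
      finally show ?thesis .
    qed simp
  qed
  also have "\<dots> = ennreal (exp (- \<bar>k\<bar> * d0 rho)) * (\<integral>\<^sup>+s. \<integral>\<^sup>+y. ennreal \<bar>rho s y\<bar> \<partial>lborel \<partial>lborel)"
    by (rule nn_integral_cmult) measurable
  finally show ?thesis .
qed

lemma nn_integral_exp_density:
  assumes c: "c > 0"
  shows "(\<integral>\<^sup>+k. ennreal (exponential_density c k) \<partial>lborel) = 1"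
proof -
  interpret prob_space "density lborel (exponential_density c)"
    using prob_space_exponential_density[OF c] .
  have "emeasure (density lborel (exponential_density c)) UNIV = 1"
    using emeasure_space_1 by simp
  thus ?thesis by (simp add: emeasure_density)
qed

lemma exp_abs_nn:
  assumes c: "c > 0"
  shows "(\<integral>\<^sup>+k. ennreal (exp (- c * \<bar>k\<bar>)) \<partial>lborel) \<le> ennreal (2 / c)"
proof -
  have "(\<integral>\<^sup>+k. ennreal (exp (- c * \<bar>k\<bar>)) \<partial>lborel)
      \<le> (\<integral>\<^sup>+k. ennreal (1/c) * (ennreal (exponential_density c k) + ennreal (exponential_density c (0 + (-1) * k))) \<partial>lborel)"
  proof (intro nn_integral_mono)
    fix k :: real
    have "exp (- c * \<bar>k\<bar>) \<le> (1/c) * (exponential_density c k + exponential_density c (0 + (-1) * k))"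
    proof (cases k "0::real" rule: linorder_cases)
      case less
      hence "exponential_density c k + exponential_density c (0 + (-1) * k) = c * exp (- c * \<bar>k\<bar>)"
        by (simp add: exponential_density_def mult.commute)
      thus ?thesis using c by simp
    next
      case equal
      thus ?thesis using c by (simp add: exponential_density_def)
    next
      case greater
      hence "exponential_density c k + exponential_density c (0 + (-1) * k) = c * exp (- c * \<bar>k\<bar>)"
        by (simp add: exponential_density_def mult.commute)
      thus ?thesis using c by simp
    qed
    thus "ennreal (exp (- c * \<bar>k\<bar>)) \<le> ennreal (1/c) * (ennreal (exponential_density c k) + ennreal (exponential_density c (0 + (-1) * k)))"
      using c exponential_density_nonneg[OF c]
      by (simp add: ennreal_mult[symmetric] ennreal_plus[symmetric] del: ennreal_plus)
  qed
  also have "\<dots> = ennreal (1/c) * ((\<integral>\<^sup>+k. ennreal (exponential_density c k) \<partial>lborel) + (\<integral>\<^sup>+k. ennreal (exponential_density c (0 + (-1) * k)) \<partial>lborel))"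
    by (simp add: nn_integral_cmult nn_integral_add)
  also have "\<dots> = ennreal (1/c) * (1 + 1)"
    using nn_integral_real_affine[of "\<lambda>k. ennreal (exponential_density c k)" "-1" 0] nn_integral_exp_density[OF c]
    by simp
  also have "ennreal (1/c) * (1 + 1) = ennreal (2/c)"
  proof -
    have "ennreal (1/c * 2) = ennreal (1/c) * ennreal 2" using c by (intro ennreal_mult) auto
    thus ?thesis by (simp add: one_add_one)
  qed
  finally show ?thesis .
qed

lemma exp_abs_integrable:
  assumes c: "c > 0"
  shows "integrable lborel (\<lambda>k::real. exp (- c * \<bar>k\<bar>))"
proof (rule integrableI_bounded)
  show "(\<lambda>k::real. exp (- c * \<bar>k\<bar>)) \<in> borel_measurable lborel" by measurable
  have "(\<integral>\<^sup>+k. ennreal (norm (exp (- c * \<bar>k\<bar>))) \<partial>lborel) = (\<integral>\<^sup>+k. ennreal (exp (- c * \<bar>k\<bar>)) \<partial>lborel)"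
    by simp
  also have "\<dots> \<le> ennreal (2 / c)" by (rule exp_abs_nn[OF c])
  finally have le: "(\<integral>\<^sup>+k. ennreal (norm (exp (- c * \<bar>k\<bar>))) \<partial>lborel) \<le> ennreal (2 / c)" .
  show "(\<integral>\<^sup>+k. ennreal (norm (exp (- c * \<bar>k\<bar>))) \<partial>lborel) < \<infinity>"
    by (rule le_less_trans[OF le]) simp
qed

lemma abs_exp_abs_integrable:
  assumes c: "c > 0"
  shows "integrable lborel (\<lambda>k::real. \<bar>k\<bar> * exp (- c * \<bar>k\<bar>))"
proof (rule Bochner_Integration.integrable_bound[where f="\<lambda>k. 2 / c * exp (- (c / 2) * \<bar>k\<bar>)"])
  show "integrable lborel (\<lambda>k::real. 2 / c * exp (- (c / 2) * \<bar>k\<bar>))"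
    using exp_abs_integrable[of "c/2"] c by simp
  show "(\<lambda>k::real. \<bar>k\<bar> * exp (- c * \<bar>k\<bar>)) \<in> borel_measurable lborel" by measurable
  show "AE k in lborel. norm (\<bar>k\<bar> * exp (- c * \<bar>k\<bar>)) \<le> norm (2 / c * exp (- (c / 2) * \<bar>k\<bar>))"
  proof (intro AE_I2)
    fix k :: real
    have "c/2 * \<bar>k\<bar> \<le> exp (c/2 * \<bar>k\<bar>)"
      using exp_ge_add_one_self[of "c/2 * \<bar>k\<bar>"] by linarith
    hence "\<bar>k\<bar> \<le> 2/c * exp (c/2 * \<bar>k\<bar>)" using c by (simp add: field_simps)
    hence "\<bar>k\<bar> * exp (- c * \<bar>k\<bar>) \<le> 2/c * exp (c/2 * \<bar>k\<bar>) * exp (- c * \<bar>k\<bar>)"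
      by (intro mult_right_mono) auto
    moreover have "2/c * exp (c/2 * \<bar>k\<bar>) * exp (- c * \<bar>k\<bar>) = 2/c * exp (- (c/2) * \<bar>k\<bar>)"
      by (simp add: mult.assoc exp_add[symmetric])
    moreover have "norm (\<bar>k\<bar> * exp (- c * \<bar>k\<bar>)) = \<bar>k\<bar> * exp (- c * \<bar>k\<bar>)"
      by (simp add: abs_mult)
    moreover have "norm (2 / c * exp (- (c / 2) * \<bar>k\<bar>)) = 2 / c * exp (- (c / 2) * \<bar>k\<bar>)"
      using c by (simp add: abs_mult)
    ultimately show "norm (\<bar>k\<bar> * exp (- c * \<bar>k\<bar>)) \<le> norm (2 / c * exp (- (c / 2) * \<bar>k\<bar>))"
      by linarith
  qed
qed

definition Vf where
  "Vf a beta lam rho delta t k = cc1 a beta lam rho delta k * of_real (exp (\<bar>k\<bar> * t))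
      + cc2 a beta lam rho delta k * of_real (exp (- \<bar>k\<bar> * t))"
definition Vfd where
  "Vfd a beta lam rho delta t k = cc1 a beta lam rho delta k * of_real (\<bar>k\<bar> * exp (\<bar>k\<bar> * t))
      - cc2 a beta lam rho delta k * of_real (\<bar>k\<bar> * exp (- \<bar>k\<bar> * t))"

lemma cis_hvd: "((\<lambda>y. cis (k * y)) has_vector_derivative (of_real k * \<i> * cis (k * y))) (at y)"
proof -
  have "((\<lambda>y. cis (k * y)) has_derivative (\<lambda>t. (k * t) *\<^sub>R (\<i> * cis (k * y)))) (at y)"
    by (intro has_derivative_cis derivative_intros)
  moreover have "(\<lambda>t. (k * t) *\<^sub>R (\<i> * cis (k * y))) = (\<lambda>t. t *\<^sub>R (of_real k * \<i> * cis (k * y)))"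
    by (auto simp: scaleR_conv_of_real fun_eq_iff)
  ultimately show ?thesis by (simp add: has_vector_derivative_def)
qed

lemma Vf_hvd: "((\<lambda>t. Vf a beta lam rho delta t k) has_vector_derivative Vfd a beta lam rho delta t k) (at t)"
  unfolding Vf_def Vfd_def
  by (auto intro!: derivative_eq_intros simp: algebra_simps)

lemma exp_comb:
  fixes K t a b :: real
  assumes "0 \<le> t" "t \<le> a" "0 \<le> K"
  shows "exp (- K * b) * exp (K * t) \<le> exp (- (b - a) * K)"
    and "exp (- K * b) * exp (- K * t) \<le> exp (- (b - a) * K)"
proof -
  have eq: "- (b - a) * K = - (K * b) + K * a" "- K * b = - (K * b)" "- K * t = - (K * t)" by (simp_all add: algebra_simps)
  have m: "K * t \<ge> 0" "K * a \<ge> 0" "K * t \<le> K * a"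
    using assms by (auto intro: mult_left_mono)
  show "exp (- K * b) * exp (K * t) \<le> exp (- (b - a) * K)"
    unfolding exp_add[symmetric] exp_le_cancel_iff eq using m by linarith
  show "exp (- K * b) * exp (- K * t) \<le> exp (- (b - a) * K)"
    unfolding exp_add[symmetric] exp_le_cancel_iff eq using m by linarith
qed

context
  fixes a beta lam :: real and rho :: "real \<Rightarrow> real \<Rightarrow> real" and delta P b :: real
  assumes rm: "(\<lambda>(x, y). rho x y) \<in> borel_measurable (lborel :: (real \<times> real) measure)"
    and a: "a > 0" and b: "b > a"
    and c1b: "\<And>k. norm (cc1 a beta lam rho delta k) \<le> P * exp (- \<bar>k\<bar> * b)"
    and c2b: "\<And>k. norm (cc2 a beta lam rho delta k) \<le> P * exp (- \<bar>k\<bar> * b)"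
begin

lemma P0: "P \<ge> 0"
proof -
  have "norm (cc1 a beta lam rho delta 0) \<le> P" using c1b[of 0] by simp
  thus ?thesis using norm_ge_zero[of "cc1 a beta lam rho delta 0"] by linarith
qed

lemma Vf_bound:
  assumes t: "0 \<le> t" "t \<le> a"
  shows "norm (Vf a beta lam rho delta t k) \<le> 2 * P * exp (- (b - a) * \<bar>k\<bar>)"
proof -
  have e1: "exp (- \<bar>k\<bar> * b) * exp (\<bar>k\<bar> * t) \<le> exp (- (b - a) * \<bar>k\<bar>)"
    using exp_comb(1)[OF t abs_ge_zero[of k]] .
  have e2: "exp (- \<bar>k\<bar> * b) * exp (- \<bar>k\<bar> * t) \<le> exp (- (b - a) * \<bar>k\<bar>)"
    using exp_comb(2)[OF t abs_ge_zero[of k]] .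
  have "norm (Vf a beta lam rho delta t k) \<le> norm (cc1 a beta lam rho delta k) * exp (\<bar>k\<bar> * t) + norm (cc2 a beta lam rho delta k) * exp (- \<bar>k\<bar> * t)"
    unfolding Vf_def by (rule order_trans[OF norm_triangle_ineq]) (simp add: norm_mult)
  also have "\<dots> \<le> P * exp (- \<bar>k\<bar> * b) * exp (\<bar>k\<bar> * t) + P * exp (- \<bar>k\<bar> * b) * exp (- \<bar>k\<bar> * t)"
    by (intro add_mono mult_right_mono c1b c2b) auto
  also have "\<dots> \<le> P * exp (- (b - a) * \<bar>k\<bar>) + P * exp (- (b - a) * \<bar>k\<bar>)"
    using add_mono[OF mult_left_mono[OF e1 P0] mult_left_mono[OF e2 P0]] by (simp add: mult.assoc)
  finally show ?thesis by simp
qed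

lemma Vfd_bound:
  assumes t: "0 \<le> t" "t \<le> a"
  shows "norm (Vfd a beta lam rho delta t k) \<le> 2 * P * (\<bar>k\<bar> * exp (- (b - a) * \<bar>k\<bar>))"
proof -
  have e1: "exp (- \<bar>k\<bar> * b) * exp (\<bar>k\<bar> * t) \<le> exp (- (b - a) * \<bar>k\<bar>)"
    using exp_comb(1)[OF t abs_ge_zero[of k]] .
  have e2: "exp (- \<bar>k\<bar> * b) * exp (- \<bar>k\<bar> * t) \<le> exp (- (b - a) * \<bar>k\<bar>)"
    using exp_comb(2)[OF t abs_ge_zero[of k]] .
  have "norm (Vfd a beta lam rho delta t k) \<le> \<bar>k\<bar> * (norm (cc1 a beta lam rho delta k) * exp (\<bar>k\<bar> * t) + norm (cc2 a beta lam rho delta k) * exp (- \<bar>k\<bar> * t))"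
    unfolding Vfd_def by (rule order_trans[OF norm_triangle_ineq4]) (simp add: norm_mult algebra_simps)
  also have "\<dots> \<le> \<bar>k\<bar> * (P * exp (- \<bar>k\<bar> * b) * exp (\<bar>k\<bar> * t) + P * exp (- \<bar>k\<bar> * b) * exp (- \<bar>k\<bar> * t))"
    by (intro mult_left_mono add_mono mult_right_mono c1b c2b) auto
  also have "\<dots> \<le> \<bar>k\<bar> * (P * exp (- (b - a) * \<bar>k\<bar>) + P * exp (- (b - a) * \<bar>k\<bar>))"
    using mult_left_mono[OF add_mono[OF mult_left_mono[OF e1 P0] mult_left_mono[OF e2 P0]] abs_ge_zero[of k]] by (simp add: mult.assoc)
  finally show ?thesis by (simp add: algebra_simps)
qed

lemma Vf_meas: "Vf a beta lam rho delta t \<in> borel_measurable borel"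
  using cc_meas[OF rm, of a beta lam delta] unfolding Vf_def by measurable

lemma Vfd_meas: "Vfd a beta lam rho delta t \<in> borel_measurable borel"
  using cc_meas[OF rm, of a beta lam delta] unfolding Vfd_def by measurable

lemma V_eq:
  assumes "0 \<le> x" "x \<le> a"
  shows "V a beta lam rho delta x y = (LINT k|lborel. Vf a beta lam rho delta x k * cis (k * y)) / of_real (2 * pi)"
  unfolding V_def Vf_def using Vhat_eq[OF assms] by simp

lemma w_int: "integrable lborel (\<lambda>k. 2 * P * (\<bar>k\<bar> * exp (- (b - a) * \<bar>k\<bar>)))"
  using abs_exp_abs_integrable[of "b - a"] b by simp

lemma dx_formula:
  assumes x: "0 < x" "x < a"
  shows "vector_derivative (\<lambda>x'. V a beta lam rho delta x' y) (at x)
       = (LINT k|lborel. Vfd a beta lam rho delta x k * cis (k * y)) / of_real (2 * pi)"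
proof -
  note [measurable] = Vf_meas Vfd_meas
  have "((\<lambda>t. LINT k|lborel. Vf a beta lam rho delta t k * cis (k * y)) has_vector_derivative
          (LINT k|lborel. Vfd a beta lam rho delta x k * cis (k * y))) (at x)"
  proof (rule deriv_under_int[where lo=0 and hi=a and w="\<lambda>k. 2 * P * (\<bar>k\<bar> * exp (- (b - a) * \<bar>k\<bar>))"])
    show "0 < x" "x < a" by (fact x)+
    show "((\<lambda>t. Vf a beta lam rho delta t k * cis (k * y)) has_vector_derivative Vfd a beta lam rho delta t k * cis (k * y)) (at t)" for t k
      by (rule has_vector_derivative_mult_left[OF Vf_hvd])
    show "(\<lambda>k. Vf a beta lam rho delta t k * cis (k * y)) \<in> borel_measurable borel" for t by measurable
    show "(\<lambda>k. Vfd a beta lam rho delta x k * cis (k * y)) \<in> borel_measurable borel" by measurable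
    show "integrable lborel (\<lambda>k. Vf a beta lam rho delta x k * cis (k * y))"
    proof (rule Bochner_Integration.integrable_bound[where f="\<lambda>k. 2 * P * exp (- (b - a) * \<bar>k\<bar>)"])
      show "integrable lborel (\<lambda>k. 2 * P * exp (- (b - a) * \<bar>k\<bar>))"
        using exp_abs_integrable[of "b - a"] b by simp
      show "AE k in lborel. norm (Vf a beta lam rho delta x k * cis (k * y)) \<le> norm (2 * P * exp (- (b - a) * \<bar>k\<bar>))"
        using Vf_bound x P0 by (auto simp: norm_mult intro: order_trans[OF _ abs_ge_self])
    qed measurable
    show "norm (Vfd a beta lam rho delta t k * cis (k * y)) \<le> 2 * P * (\<bar>k\<bar> * exp (- (b - a) * \<bar>k\<bar>))"
      if "0 < t" "t < a" for t k
      using Vfd_bound[of t k] that by (simp add: norm_mult)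
    show "integrable lborel (\<lambda>k. 2 * P * (\<bar>k\<bar> * exp (- (b - a) * \<bar>k\<bar>)))" by (rule w_int)
  qed
  hence "((\<lambda>t. (LINT k|lborel. Vf a beta lam rho delta t k * cis (k * y)) / of_real (2 * pi)) has_vector_derivative
          (LINT k|lborel. Vfd a beta lam rho delta x k * cis (k * y)) / of_real (2 * pi)) (at x)"
    by (rule has_vector_derivative_divide)
  hence "((\<lambda>x'. V a beta lam rho delta x' y) has_vector_derivative
          (LINT k|lborel. Vfd a beta lam rho delta x k * cis (k * y)) / of_real (2 * pi)) (at x)"
    by (rule has_vector_derivative_transform_within_open[where S="{0<..<a}"]) (use x V_eq in auto)
  thus ?thesis by (rule vector_derivative_at)
qed

lemma dy_formula:
  assumes x: "0 \<le> x" "x \<le> a"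
  shows "vector_derivative (\<lambda>y'. V a beta lam rho delta x y') (at y)
       = (LINT k|lborel. (Vf a beta lam rho delta x k * (of_real k * \<i>)) * cis (k * y)) / of_real (2 * pi)"
proof -
  note [measurable] = Vf_meas Vfd_meas
  have "((\<lambda>t. LINT k|lborel. Vf a beta lam rho delta x k * cis (k * t)) has_vector_derivative
          (LINT k|lborel. Vf a beta lam rho delta x k * (of_real k * \<i> * cis (k * y)))) (at y)"
  proof (rule deriv_under_int[where lo="y - 1" and hi="y + 1" and w="\<lambda>k. 2 * P * (\<bar>k\<bar> * exp (- (b - a) * \<bar>k\<bar>))"])
    show "y - 1 < y" "y < y + 1" by auto
    show "((\<lambda>t. Vf a beta lam rho delta x k * cis (k * t)) has_vector_derivative Vf a beta lam rho delta x k * (of_real k * \<i> * cis (k * t))) (at t)" for t k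
      by (rule has_vector_derivative_mult_right[OF cis_hvd])
    show "(\<lambda>k. Vf a beta lam rho delta x k * cis (k * t)) \<in> borel_measurable borel" for t by measurable
    show "(\<lambda>k. Vf a beta lam rho delta x k * (of_real k * \<i> * cis (k * y))) \<in> borel_measurable borel" by measurable
    show "integrable lborel (\<lambda>k. Vf a beta lam rho delta x k * cis (k * y))"
    proof (rule Bochner_Integration.integrable_bound[where f="\<lambda>k. 2 * P * exp (- (b - a) * \<bar>k\<bar>)"])
      show "integrable lborel (\<lambda>k. 2 * P * exp (- (b - a) * \<bar>k\<bar>))"
        using exp_abs_integrable[of "b - a"] b by simp
      show "AE k in lborel. norm (Vf a beta lam rho delta x k * cis (k * y)) \<le> norm (2 * P * exp (- (b - a) * \<bar>k\<bar>))"
        using Vf_bound x P0 by (auto simp: norm_mult intro: order_trans[OF _ abs_ge_self])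
    qed measurable
    show "norm (Vf a beta lam rho delta x k * (of_real k * \<i> * cis (k * t))) \<le> 2 * P * (\<bar>k\<bar> * exp (- (b - a) * \<bar>k\<bar>))"
      for t k
      using Vf_bound[OF x, of k] mult_right_mono[OF Vf_bound[OF x, of k] abs_ge_zero[of k]]
      by (simp add: norm_mult mult_ac)
    show "integrable lborel (\<lambda>k. 2 * P * (\<bar>k\<bar> * exp (- (b - a) * \<bar>k\<bar>)))" by (rule w_int)
  qed
  hence "((\<lambda>t. (LINT k|lborel. Vf a beta lam rho delta x k * cis (k * t)) / of_real (2 * pi)) has_vector_derivative
          (LINT k|lborel. Vf a beta lam rho delta x k * (of_real k * \<i> * cis (k * y))) / of_real (2 * pi)) (at y)"
    by (rule has_vector_derivative_divide)
  hence "((\<lambda>y'. V a beta lam rho delta x y') has_vector_derivative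
          (LINT k|lborel. Vf a beta lam rho delta x k * (of_real k * \<i> * cis (k * y))) / of_real (2 * pi)) (at y)"
    using V_eq[OF x] by simp
  hence "vector_derivative (\<lambda>y'. V a beta lam rho delta x y') (at y) = (LINT k|lborel. Vf a beta lam rho delta x k * (of_real k * \<i> * cis (k * y))) / of_real (2 * pi)"
    by (rule vector_derivative_at)
  also have "(LINT k|lborel. Vf a beta lam rho delta x k * (of_real k * \<i> * cis (k * y))) = (LINT k|lborel. (Vf a beta lam rho delta x k * (of_real k * \<i>)) * cis (k * y))"
    by (simp add: mult_ac)
  finally show ?thesis .
qed

end

lemma nn_integral_cmult_real:
  assumes "c \<ge> 0" and "f \<in> borel_measurable M" and "\<And>x. f x \<ge> 0"
  shows "(\<integral>\<^sup>+x. ennreal (c * f x) \<partial>M) = ennreal c * (\<integral>\<^sup>+x. ennreal (f x) \<partial>M)"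
proof -
  have "(\<integral>\<^sup>+x. ennreal (c * f x) \<partial>M) = (\<integral>\<^sup>+x. ennreal c * ennreal (f x) \<partial>M)"
    using assms by (intro nn_integral_cong) (simp add: ennreal_mult)
  also have "\<dots> = ennreal c * (\<integral>\<^sup>+x. ennreal (f x) \<partial>M)"
    using assms by (intro nn_integral_cmult) auto
  finally show ?thesis .
qed

context
  fixes a beta lam :: real and rho :: "real \<Rightarrow> real \<Rightarrow> real" and delta P b :: real and h :: "real \<Rightarrow> real"
  assumes rm: "(\<lambda>(x, y). rho x y) \<in> borel_measurable (lborel :: (real \<times> real) measure)"
    and a: "a > 0" and b: "b > a"
    and c1b: "\<And>k. norm (cc1 a beta lam rho delta k) \<le> P * exp (- \<bar>k\<bar> * b)"
    and c2b: "\<And>k. norm (cc2 a beta lam rho delta k) \<le> P * exp (- \<bar>k\<bar> * b)"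
    and hm: "h \<in> borel_measurable borel"
    and hb: "\<And>k x. a / 2 \<le> x \<Longrightarrow> x \<le> a \<Longrightarrow>
        \<bar>k\<bar> * (norm (cc1 a beta lam rho delta k) * exp (\<bar>k\<bar> * x) + norm (cc2 a beta lam rho delta k) * exp (- \<bar>k\<bar> * x)) \<le> h k"
begin

lemma inner_bound:
  assumes x: "a / 2 \<le> x" "x < a"
  shows "(\<integral>\<^sup>+y. ennreal ((norm (vector_derivative (\<lambda>x'. V a beta lam rho delta x' y) (at x)))\<^sup>2
               + (norm (vector_derivative (\<lambda>y'. V a beta lam rho delta x y') (at y)))\<^sup>2) \<partial>lborel)
     \<le> ennreal (1 / pi) * (\<integral>\<^sup>+k. ennreal ((h k)\<^sup>2) \<partial>lborel)"
proof -
  note [measurable] = Vf_meas[OF rm a b c1b c2b] Vfd_meas[OF rm a b c1b c2b] hm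
  define fx where "fx k = Vfd a beta lam rho delta x k" for k
  define fy where "fy k = Vf a beta lam rho delta x k * (of_real k * \<i>)" for k
  have fxm[measurable]: "fx \<in> borel_measurable borel" unfolding fx_def by measurable
  have fym[measurable]: "fy \<in> borel_measurable borel" unfolding fy_def by measurable
  have x0: "0 < x" "0 \<le> x" "x \<le> a" using x a by auto
  have dx: "vector_derivative (\<lambda>x'. V a beta lam rho delta x' y) (at x) = (LINT k|lborel. fx k * cis (k * y)) / of_real (2 * pi)" for y
    unfolding fx_def by (rule dx_formula[OF rm a b c1b c2b x0(1) x(2)])
  have dy: "vector_derivative (\<lambda>y'. V a beta lam rho delta x y') (at y) = (LINT k|lborel. fy k * cis (k * y)) / of_real (2 * pi)" for y
    unfolding fy_def by (rule dy_formula[OF rm a b c1b c2b x0(2) x0(3)])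
  have hx: "\<bar>k\<bar> * (norm (cc1 a beta lam rho delta k) * exp (\<bar>k\<bar> * x) + norm (cc2 a beta lam rho delta k) * exp (- \<bar>k\<bar> * x)) \<le> h k" for k
    using hb[of x k] x by simp
  have fxb: "norm (fx k) \<le> h k" for k
  proof -
    have "norm (fx k) \<le> \<bar>k\<bar> * (norm (cc1 a beta lam rho delta k) * exp (\<bar>k\<bar> * x) + norm (cc2 a beta lam rho delta k) * exp (- \<bar>k\<bar> * x))"
      unfolding fx_def Vfd_def by (rule order_trans[OF norm_triangle_ineq4]) (simp add: norm_mult algebra_simps)
    thus ?thesis using hx[of k] by linarith
  qed
  have fyb: "norm (fy k) \<le> h k" for k
  proof -
    have "norm (fy k) = \<bar>k\<bar> * norm (Vf a beta lam rho delta x k)"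
      unfolding fy_def by (simp add: norm_mult)
    also have "\<dots> \<le> \<bar>k\<bar> * (norm (cc1 a beta lam rho delta k) * exp (\<bar>k\<bar> * x) + norm (cc2 a beta lam rho delta k) * exp (- \<bar>k\<bar> * x))"
      unfolding Vf_def by (intro mult_left_mono order_trans[OF norm_triangle_ineq]) (auto simp: norm_mult)
    finally show ?thesis using hx[of k] by linarith
  qed
  have h0: "h k \<ge> 0" for k using fxb[of k] norm_ge_zero[of "fx k"] by linarith
  have wi: "integrable lborel (\<lambda>k. 2 * P * (\<bar>k\<bar> * exp (- (b - a) * \<bar>k\<bar>)))"
    by (rule w_int[OF rm a b c1b c2b])
  have fxi: "integrable lborel fx"
    by (rule Bochner_Integration.integrable_bound[OF wi])
       (use Vfd_bound[OF rm a b c1b c2b x0(2) x0(3)] in \<open>auto simp: fx_def intro: order_trans[OF _ abs_ge_self]\<close>)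
  have fyi: "integrable lborel fy"
  proof (rule Bochner_Integration.integrable_bound[OF wi])
    show "fy \<in> borel_measurable lborel" by simp
    show "AE k in lborel. norm (fy k) \<le> norm (2 * P * (\<bar>k\<bar> * exp (- (b - a) * \<bar>k\<bar>)))"
    proof (intro AE_I2)
      fix k
      have "norm (fy k) = \<bar>k\<bar> * norm (Vf a beta lam rho delta x k)"
        unfolding fy_def by (simp add: norm_mult)
      also have "\<dots> \<le> \<bar>k\<bar> * (2 * P * exp (- (b - a) * \<bar>k\<bar>))"
        by (intro mult_left_mono Vf_bound[OF rm a b c1b c2b x0(2) x0(3)]) auto
      also have "\<dots> \<le> norm (2 * P * (\<bar>k\<bar> * exp (- (b - a) * \<bar>k\<bar>)))" by (simp add: mult_ac)
      finally show "norm (fy k) \<le> norm (2 * P * (\<bar>k\<bar> * exp (- (b - a) * \<bar>k\<bar>)))" .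
    qed
  qed
  define H where "H = (\<integral>\<^sup>+k. ennreal ((h k)\<^sup>2) \<partial>lborel)"
  have Hx: "(\<integral>\<^sup>+k. ennreal ((norm (fx k))\<^sup>2) \<partial>lborel) \<le> H"
    unfolding H_def by (intro nn_integral_mono ennreal_leI power_mono fxb) auto
  have Hy: "(\<integral>\<^sup>+k. ennreal ((norm (fy k))\<^sup>2) \<partial>lborel) \<le> H"
    unfolding H_def by (intro nn_integral_mono ennreal_leI power_mono fyb) auto
  define c where "c = 1 / (2 * pi)^2"
  have c0: "c \<ge> 0" by (simp add: c_def)
  have "(\<integral>\<^sup>+y. ennreal ((norm (vector_derivative (\<lambda>x'. V a beta lam rho delta x' y) (at x)))\<^sup>2
               + (norm (vector_derivative (\<lambda>y'. V a beta lam rho delta x y') (at y)))\<^sup>2) \<partial>lborel)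
     = (\<integral>\<^sup>+y. ennreal (c * (norm (LINT k|lborel. fx k * cis (k * y)))\<^sup>2)
               + ennreal (c * (norm (LINT k|lborel. fy k * cis (k * y)))\<^sup>2) \<partial>lborel)"
  proof (intro nn_integral_cong)
    fix y
    show "ennreal ((norm (vector_derivative (\<lambda>x'. V a beta lam rho delta x' y) (at x)))\<^sup>2
               + (norm (vector_derivative (\<lambda>y'. V a beta lam rho delta x y') (at y)))\<^sup>2)
       = ennreal (c * (norm (LINT k|lborel. fx k * cis (k * y)))\<^sup>2)
               + ennreal (c * (norm (LINT k|lborel. fy k * cis (k * y)))\<^sup>2)"
      unfolding dx dy c_def using c0
      by (subst ennreal_plus[symmetric]) (auto simp: norm_divide power_divide)
  qed
  also have "\<dots> = (\<integral>\<^sup>+y. ennreal (c * (norm (LINT k|lborel. fx k * cis (k * y)))\<^sup>2) \<partial>lborel)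
               + (\<integral>\<^sup>+y. ennreal (c * (norm (LINT k|lborel. fy k * cis (k * y)))\<^sup>2) \<partial>lborel)"
    by (rule nn_integral_add) measurable
  also have "\<dots> = ennreal c * (\<integral>\<^sup>+y. ennreal ((norm (LINT k|lborel. fx k * cis (k * y)))\<^sup>2) \<partial>lborel)
               + ennreal c * (\<integral>\<^sup>+y. ennreal ((norm (LINT k|lborel. fy k * cis (k * y)))\<^sup>2) \<partial>lborel)"
    using c0 by (simp add: nn_integral_cmult_real)
  also have "\<dots> \<le> ennreal c * (ennreal (2 * pi) * H) + ennreal c * (ennreal (2 * pi) * H)"
  proof (intro add_mono mult_left_mono)
    show "(\<integral>\<^sup>+y. ennreal ((norm (LINT k|lborel. fx k * cis (k * y)))\<^sup>2) \<partial>lborel) \<le> ennreal (2 * pi) * H"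
      using plancherel_le[OF fxm fxi] Hx by (rule order_trans[OF _ mult_left_mono]) simp
    show "(\<integral>\<^sup>+y. ennreal ((norm (LINT k|lborel. fy k * cis (k * y)))\<^sup>2) \<partial>lborel) \<le> ennreal (2 * pi) * H"
      using plancherel_le[OF fym fyi] Hy by (rule order_trans[OF _ mult_left_mono]) simp
  qed auto
  also have "\<dots> = ennreal (c * (2 * pi) * 2) * H"
    using c0 by (simp add: ennreal_mult mult_ac flip: mult_2)
  also have "c * (2 * pi) * 2 = 1 / pi"
    by (simp add: c_def power2_eq_square field_simps)
  finally show ?thesis unfolding H_def .
qed

lemma E_le:
  assumes xi: "0 < xi" "xi < a / 2" and d: "delta \<ge> 0"
  shows "E a beta lam rho xi delta \<le> ennreal delta * (ennreal xi * (ennreal (1 / pi) * (\<integral>\<^sup>+k. ennreal ((h k)\<^sup>2) \<partial>lborel)))"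
proof -
  define Q where "Q = ennreal (1 / pi) * (\<integral>\<^sup>+k. ennreal ((h k)\<^sup>2) \<partial>lborel)"
  define inner where "inner x = (\<integral>\<^sup>+y. ennreal ((norm (vector_derivative (\<lambda>x'. V a beta lam rho delta x' y) (at x)))\<^sup>2
               + (norm (vector_derivative (\<lambda>y'. V a beta lam rho delta x y') (at y)))\<^sup>2) \<partial>lborel)" for x
  have "E a beta lam rho xi delta = ennreal delta * (\<integral>\<^sup>+x. inner x * indicator {a - xi..a} x \<partial>lborel)"
    unfolding E_def inner_def by simp
  also have "(\<integral>\<^sup>+x. inner x * indicator {a - xi..a} x \<partial>lborel) \<le> (\<integral>\<^sup>+x. Q * indicator {a - xi..a} x \<partial>lborel)"
  proof (rule nn_integral_mono_AE)
    show "AE x in lborel. inner x * indicator {a - xi..a} x \<le> Q * indicator {a - xi..a} x"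
      using AE_lborel_singleton[of a]
    proof eventually_elim
      case (elim x)
      show ?case
      proof (cases "x \<in> {a - xi..a}")
        case True
        hence "a / 2 \<le> x" "x < a" using elim xi by auto
        hence "inner x \<le> Q" unfolding inner_def Q_def by (rule inner_bound)
        thus ?thesis using True by simp
      qed simp
    qed
  qed
  also have "(\<integral>\<^sup>+x. Q * indicator {a - xi..a} x \<partial>lborel) = Q * ennreal xi"
    using xi by (simp add: nn_integral_cmult_indicator)
  finally have "E a beta lam rho xi delta \<le> ennreal delta * (Q * ennreal xi)"
    by (simp add: mult_left_mono)
  thus ?thesis unfolding Q_def by (simp add: mult_ac)
qed

end

context
  fixes a :: real and rho :: "real \<Rightarrow> real \<Rightarrow> real"
  assumes inP: "in_P a rho"
begin

lemma P_rm: "(\<lambda>(x, y). rho x y) \<in> borel_measurable (lborel :: (real \<times> real) measure)"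
  using inP unfolding in_P_def by blast

lemma P_meas_pair: "(\<lambda>p. rho (fst p) (snd p)) \<in> borel_measurable (lborel \<Otimes>\<^sub>M lborel)"
  using P_rm by (simp add: lborel_prod case_prod_beta')

lemma P_nz_supp: "rho x y \<noteq> 0 \<Longrightarrow> (x, y) \<in> supp rho"
  unfolding supp_def by (rule closure_subset[THEN subsetD]) simp

lemma P_supp_ne: "supp rho \<noteq> {}"
proof
  assume e: "supp rho = {}"
  have "0 < emeasure lborel (supp rho)" using inP unfolding in_P_def by blast
  thus False unfolding e by simp
qed

lemma P_compact: "compact (supp rho)"
  using inP unfolding in_P_def by blast

lemma P_fst_bdd: "bdd_below (fst ` supp rho)" "bdd_above (fst ` supp rho)"
proof -
  have "compact (fst ` supp rho)"
    using P_compact by (intro compact_continuous_image continuous_intros)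
  hence "bounded (fst ` supp rho)" by (rule compact_imp_bounded)
  thus "bdd_below (fst ` supp rho)" by (rule bounded_imp_bdd_below)
  from \<open>bounded (fst ` supp rho)\<close> show "bdd_above (fst ` supp rho)" by (rule bounded_imp_bdd_above)
qed

lemma P_supp_x: "(x, y) \<in> supp rho \<Longrightarrow> d0 rho \<le> x \<and> x \<le> d1 rho"
proof -
  assume "(x, y) \<in> supp rho"
  hence xi: "x \<in> fst ` supp rho" by (rule image_eqI[of x fst "(x, y)", rotated]) simp
  show ?thesis
    unfolding d0_def d1_def using cInf_lower[OF xi P_fst_bdd(1)] cSup_upper[OF xi P_fst_bdd(2)] by simp
qed

lemma P_supp_y: "\<exists>Y \<ge> 0. \<forall>x y. (x, y) \<in> supp rho \<longrightarrow> \<bar>y\<bar> \<le> Y"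
proof -
  have "bounded (supp rho)" using P_compact by (rule compact_imp_bounded)
  then obtain B where B: "\<And>p. p \<in> supp rho \<Longrightarrow> norm p \<le> B" by (auto simp: bounded_iff)
  have "\<bar>y\<bar> \<le> max B 0" if "(x, y) \<in> supp rho" for x y
  proof -
    have "\<bar>y\<bar> \<le> norm (x, y)" by (simp add: norm_Pair real_le_rsqrt)
    also have "\<dots> \<le> B" using B that by auto
    finally show ?thesis by simp
  qed
  thus ?thesis by (intro exI[of _ "max B 0"]) auto
qed

lemma P_nn_finite: "(\<integral>\<^sup>+p. ennreal \<bar>rho (fst p) (snd p)\<bar> \<partial>(lborel \<Otimes>\<^sub>M lborel)) < \<infinity>"
proof -
  obtain C where C: "AE p in (lborel :: (real \<times> real) measure). \<bar>(case p of (x, y) \<Rightarrow> rho x y)\<bar> \<le> C"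
    using inP unfolding in_P_def by blast
  have fin: "emeasure lborel (supp rho) < \<infinity>" using inP unfolding in_P_def by blast
  have cl: "closed (supp rho)" by (simp add: supp_def)
  have "(\<integral>\<^sup>+p. ennreal \<bar>rho (fst p) (snd p)\<bar> \<partial>(lborel \<Otimes>\<^sub>M lborel))
      = (\<integral>\<^sup>+p. ennreal \<bar>rho (fst p) (snd p)\<bar> \<partial>lborel)" by (simp add: lborel_prod)
  also have "\<dots> \<le> (\<integral>\<^sup>+p. ennreal (max C 0) * indicator (supp rho) p \<partial>lborel)"
  proof (rule nn_integral_mono_AE)
    show "AE p in lborel. ennreal \<bar>rho (fst p) (snd p)\<bar> \<le> ennreal (max C 0) * indicator (supp rho) p"
      using C
    proof eventually_elim
      case (elim p)
      show ?case
      proof (cases "p \<in> supp rho")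
        case True thus ?thesis using elim by (auto simp: case_prod_beta' intro!: ennreal_leI)
      next
        case False
        hence "rho (fst p) (snd p) = 0" using P_nz_supp[of "fst p" "snd p"] by auto
        thus ?thesis by simp
      qed
    qed
  qed
  also have "\<dots> = ennreal (max C 0) * emeasure lborel (supp rho)"
    using cl by (intro nn_integral_cmult_indicator) (simp add: borel_closed)
  also have "\<dots> < \<infinity>" using fin by (simp add: ennreal_mult_less_top)
  finally show ?thesis .
qed

lemma P_integrable: "integrable (lborel \<Otimes>\<^sub>M lborel) (\<lambda>p. rho (fst p) (snd p))"
  using P_meas_pair P_nn_finite by (intro integrableI_bounded) auto

lemma P_int0: "integral\<^sup>L (lborel \<Otimes>\<^sub>M lborel) (\<lambda>p. rho (fst p) (snd p)) = 0"
proof -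
  have "integral\<^sup>L (lborel :: (real \<times> real) measure) (\<lambda>(x, y). rho x y) = 0" using inP unfolding in_P_def by blast
  thus ?thesis by (simp add: lborel_prod case_prod_beta')
qed

lemma P_iter_finite: "(\<integral>\<^sup>+s. \<integral>\<^sup>+y. ennreal \<bar>rho s y\<bar> \<partial>lborel \<partial>lborel) < \<infinity>"
proof -
  have m: "(\<lambda>p. ennreal \<bar>rho (fst p) (snd p)\<bar>) \<in> borel_measurable (lborel \<Otimes>\<^sub>M lborel)"
    using P_meas_pair by measurable
  have "(\<integral>\<^sup>+s. \<integral>\<^sup>+y. ennreal \<bar>rho s y\<bar> \<partial>lborel \<partial>lborel) = (\<integral>\<^sup>+p. ennreal \<bar>rho (fst p) (snd p)\<bar> \<partial>(lborel \<Otimes>\<^sub>M lborel))"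
    using lborel.nn_integral_fst[OF m] by simp
  thus ?thesis using P_nn_finite by simp
qed

end

lemma cis_minus_one: "norm (cis t - 1) \<le> \<bar>t\<bar>"
  using iexp_approx1[of t 0] by (simp add: cis_conv_exp)

context
  fixes a :: real and rho :: "real \<Rightarrow> real \<Rightarrow> real"
  assumes inP: "in_P a rho" and d0pos: "d0 rho \<ge> 0"
begin

lemma nr: "norm (complex_of_real r - 1) = \<bar>r - 1\<bar>"
  by (metis norm_of_real of_real_1 of_real_diff)

lemma I_small: "\<exists>Ci \<ge> 0. \<forall>k. norm (I_k rho k) \<le> Ci * \<bar>k\<bar>"
proof -
  obtain Y where Y0: "Y \<ge> 0" and Y: "\<And>x y. (x, y) \<in> supp rho \<Longrightarrow> \<bar>y\<bar> \<le> Y"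
    using P_supp_y[OF inP] by blast
  define g where "g p = rho (fst p) (snd p)" for p :: "real \<times> real"
  define M where "M = (lborel \<Otimes>\<^sub>M lborel :: (real \<times> real) measure)"
  have gm'[measurable]: "g \<in> borel_measurable (lborel \<Otimes>\<^sub>M lborel)" unfolding g_def by (rule P_meas_pair[OF inP])
  have gm[measurable]: "g \<in> borel_measurable M" unfolding M_def by (rule gm')
  have gi: "integrable M g" unfolding g_def M_def by (rule P_integrable[OF inP])
  have g0: "integral\<^sup>L M g = 0" unfolding g_def M_def by (rule P_int0[OF inP])
  obtain p0 where p0: "p0 \<in> supp rho" using P_supp_ne[OF inP] by auto
  have d01: "d0 rho \<le> d1 rho" using P_supp_x[OF inP, of "fst p0" "snd p0"] p0 by simp
  define Ci where "Ci = (Y + d1 rho) * (LINT p|M. \<bar>g p\<bar>)"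
  have Ci0: "Ci \<ge> 0" unfolding Ci_def using Y0 d01 d0pos by (intro mult_nonneg_nonneg integral_nonneg_AE) auto
  have "norm (I_k rho k) \<le> Ci * \<bar>k\<bar>" for k
  proof -
    define e where "e s = exp (- \<bar>k\<bar> * s)" for s
    define F where "F p = indicator {d0 rho..d1 rho} (fst p) *\<^sub>R (of_real (g p) * cis (- (k * snd p)) * of_real (e (fst p)))" for p
    have Fm[measurable]: "F \<in> borel_measurable M" unfolding F_def e_def M_def by measurable
    have Fb: "norm (F p) \<le> \<bar>g p\<bar>" for p
    proof (cases "fst p \<in> {d0 rho..d1 rho}")
      case True
      hence "e (fst p) \<le> 1" unfolding e_def using d0pos by (auto intro!: mult_nonneg_nonneg)
      hence "\<bar>g p\<bar> * e (fst p) \<le> \<bar>g p\<bar>" using mult_left_mono[of "e (fst p)" 1 "\<bar>g p\<bar>"] by simp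
      moreover have "norm (F p) = \<bar>g p\<bar> * e (fst p)"
        unfolding F_def using True by (simp add: norm_mult e_def)
      ultimately show ?thesis by simp
    qed (simp add: F_def)
    have Fi: "integrable M F"
      by (rule Bochner_Integration.integrable_bound[OF integrable_abs[OF gi]]) (auto simp: Fb)
    have "I_k rho k = (LINT s|lborel. (LINT y|lborel. F (s, y)))"
      unfolding I_k_def set_lebesgue_integral_def rho_hat_def F_def g_def
      by (intro Bochner_Integration.integral_cong refl) (simp add: e_def)
    also have "\<dots> = integral\<^sup>L M F"
      unfolding M_def by (rule lborel_pair.integral_fst'[OF Fi[unfolded M_def]])
    also have "\<dots> = integral\<^sup>L M F - integral\<^sup>L M (\<lambda>p. complex_of_real (g p))"
      using g0 by simp
    also have "\<dots> = (LINT p|M. F p - complex_of_real (g p))"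
      using Fi gi by (intro Bochner_Integration.integral_diff[symmetric]) auto
    finally have Ieq: "I_k rho k = (LINT p|M. F p - complex_of_real (g p))" .
    have pw: "norm (F p - complex_of_real (g p)) \<le> \<bar>k\<bar> * (Y + d1 rho) * \<bar>g p\<bar>" for p
    proof (cases "g p = 0")
      case True thus ?thesis by (simp add: F_def)
    next
      case False
      hence ps: "p \<in> supp rho" using P_nz_supp[OF inP, of "fst p" "snd p"] by (simp add: g_def)
      hence sx: "d0 rho \<le> fst p" "fst p \<le> d1 rho" using P_supp_x[OF inP, of "fst p" "snd p"] by auto
      have sy: "\<bar>snd p\<bar> \<le> Y" using Y[of "fst p" "snd p"] ps by simp
      have s0: "fst p \<ge> 0" using sx d0pos by linarith
      have "F p - complex_of_real (g p) = of_real (g p) * ((cis (- (k * snd p)) - 1) * of_real (e (fst p)) + (of_real (e (fst p)) - 1))"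
        unfolding F_def using sx by (simp add: algebra_simps)
      hence "norm (F p - complex_of_real (g p)) \<le> \<bar>g p\<bar> * (norm (cis (- (k * snd p)) - 1) * e (fst p) + \<bar>e (fst p) - 1\<bar>)"
        using nr by (simp add: norm_mult e_def) (intro mult_left_mono order_trans[OF norm_triangle_ineq]; simp add: norm_mult)
      also have "\<dots> \<le> \<bar>g p\<bar> * (\<bar>k\<bar> * Y + \<bar>k\<bar> * d1 rho)"
      proof (intro mult_left_mono add_mono)
        have c: "norm (cis (- (k * snd p)) - 1) \<le> \<bar>k\<bar> * Y"
          using cis_minus_one[of "- (k * snd p)"] mult_left_mono[OF sy, of "\<bar>k\<bar>"] by (simp add: abs_mult)
        have "e (fst p) \<le> 1" unfolding e_def using s0 by (auto intro!: mult_nonneg_nonneg)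
        thus "norm (cis (- (k * snd p)) - 1) * e (fst p) \<le> \<bar>k\<bar> * Y"
          using mult_mono[OF c \<open>e (fst p) \<le> 1\<close> mult_nonneg_nonneg[OF abs_ge_zero[of k] Y0]] by (simp add: e_def)
        have "1 - \<bar>k\<bar> * fst p \<le> e (fst p)" unfolding e_def using exp_ge_add_one_self[of "- \<bar>k\<bar> * fst p"] by simp
        moreover have "e (fst p) \<le> 1" unfolding e_def using s0 by (auto intro!: mult_nonneg_nonneg)
        moreover have "\<bar>k\<bar> * fst p \<le> \<bar>k\<bar> * d1 rho" using sx by (intro mult_left_mono) auto
        ultimately show "\<bar>e (fst p) - 1\<bar> \<le> \<bar>k\<bar> * d1 rho" by simp
      qed auto
      finally show ?thesis by (simp add: algebra_simps)
    qed
    have "norm (I_k rho k) \<le> (LINT p|M. norm (F p - complex_of_real (g p)))"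
      unfolding Ieq by (rule integral_norm_bound)
    also have "\<dots> \<le> (LINT p|M. \<bar>k\<bar> * (Y + d1 rho) * \<bar>g p\<bar>)"
      using Fi gi pw by (intro integral_mono) auto
    also have "\<dots> = Ci * \<bar>k\<bar>" by (simp add: Ci_def)
    finally show ?thesis .
  qed
  thus ?thesis using Ci0 by blast
qed

end

lemma amgm_powr:
  fixes u v th :: real
  assumes u: "u > 0" and v: "v > 0" and th: "0 \<le> th" "th \<le> 1"
  shows "u powr th * v powr (1 - th) \<le> u + v"
proof (cases "u \<le> v")
  case True
  have "u powr th * v powr (1 - th) \<le> v powr th * v powr (1 - th)"
    using True u th by (intro mult_right_mono powr_mono2) auto
  also have "\<dots> = v" using v by (simp add: powr_add[symmetric])
  finally show ?thesis using u by simp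
next
  case False
  have "u powr th * v powr (1 - th) \<le> u powr th * u powr (1 - th)"
    using False v th by (intro mult_left_mono powr_mono2) auto
  also have "\<dots> = u" using u by (simp add: powr_add[symmetric])
  finally show ?thesis using v by simp
qed

lemma inv_sum_bound:
  fixes u q th :: real
  assumes u: "u > 0" and q: "q > 0" and th: "0 \<le> th" "th \<le> 1"
  shows "1 / (u + 3 * q) \<le> u powr (- th) * q powr (th - 1)"
proof -
  have "u powr th * q powr (1 - th) \<le> u + q" by (rule amgm_powr[OF u q th])
  also have "\<dots> \<le> u + 3 * q" using q by simp
  finally have le: "u powr th * q powr (1 - th) \<le> u + 3 * q" .
  have pos: "u powr th * q powr (1 - th) > 0" using u q by simp
  have "1 / (u + 3 * q) \<le> 1 / (u powr th * q powr (1 - th))"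
    using le pos by (intro divide_left_mono) auto
  also have "\<dots> = u powr (- th) * q powr (th - 1)"
    using u q by (simp add: powr_minus divide_inverse inverse_mult_distrib powr_minus_divide[symmetric]
        flip: powr_minus)
  finally show ?thesis .
qed

lemma exp_powr: "exp (z::real) powr y = exp (y * z)"
  by (simp add: powr_def)

lemma key_scalar:
  fixes K a d s dl R th I A n1 n2 x :: real
  assumes K: "K > 0" and a: "a > 0" and dl: "dl > 0" and s: "s > 0" and R: "R \<ge> 0"
    and th: "0 \<le> th" "th \<le> 1" and x: "a / 2 \<le> x" "x \<le> a"
    and I: "I \<le> R * exp (- K * d)" and I0: "0 \<le> I"
    and A: "A \<le> 4 * I / (K * (dl * s + 3 * (exp (- K * a))^2))"
    and n1: "n1 \<le> A * s / 2" and n2: "n2 \<le> 3 * A / 2" and n10: "0 \<le> n1" and n20: "0 \<le> n2"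
  shows "K * (n1 * exp (K * x) + n2 * exp (- K * x))
     \<le> 2 * R * s * (dl * s) powr (- th) * exp (- (d - 3 * a + 2 * a * th) * K) + 2 * R * exp (- (d - 3 * a / 2) * K)"
proof -
  define q where "q = exp (- 2 * K * a)"
  have q0: "q > 0" by (simp add: q_def)
  have qe: "(exp (- K * a))^2 = q" unfolding q_def by (simp add: power2_eq_square exp_add[symmetric])
  define D where "D = dl * s + 3 * q"
  have D0: "D > 0" unfolding D_def using dl s q0 by (simp add: add_pos_pos)
  have A': "A \<le> 4 * I / (K * D)" using A unfolding D_def qe .
  have "0 \<le> A * s / 2" using n1 n10 by linarith
  hence A0: "A \<ge> 0" using s by (simp add: zero_le_mult_iff)
  have KA: "K * A \<le> 4 * I / D"
    using mult_left_mono[OF A', of K] K D0 by (simp add: field_simps)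
  have invD: "1 / D \<le> (dl * s) powr (- th) * q powr (th - 1)"
    unfolding D_def by (rule inv_sum_bound) (use dl s q0 th in auto)
  have invD2: "1 / D \<le> 1 / (3 * q)"
    unfolding D_def using dl s q0 mult_pos_pos[OF dl s] by (intro divide_left_mono) (auto intro!: mult_pos_pos add_pos_pos)
  have qp: "q powr (th - 1) = exp (2 * K * a * (1 - th))"
    unfolding q_def exp_powr by (simp add: algebra_simps)
  have t1: "K * (n1 * exp (K * x)) \<le> 2 * R * s * (dl * s) powr (- th) * exp (- (d - 3 * a + 2 * a * th) * K)"
  proof -
    have "K * (n1 * exp (K * x)) \<le> K * (A * s / 2 * exp (K * a))"
      using K n1 n10 x by (intro mult_left_mono mult_mono) auto
    also have "\<dots> = (K * A) * (s / 2) * exp (K * a)" by (simp add: algebra_simps)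
    also have "\<dots> \<le> (4 * I / D) * (s / 2) * exp (K * a)"
      using KA s by (intro mult_right_mono) auto
    also have "\<dots> = 2 * I * s * exp (K * a) * (1 / D)" by (simp add: field_simps)
    also have "\<dots> \<le> 2 * (R * exp (- K * d)) * s * exp (K * a) * ((dl * s) powr (- th) * q powr (th - 1))"
      using I I0 s invD D0 by (intro mult_mono mult_right_mono mult_left_mono) auto
    also have "\<dots> = 2 * R * s * (dl * s) powr (- th) * (exp (- K * d) * exp (K * a) * exp (2 * K * a * (1 - th)))"
      unfolding qp by (simp add: algebra_simps)
    also have "exp (- K * d) * exp (K * a) * exp (2 * K * a * (1 - th)) = exp (- (d - 3 * a + 2 * a * th) * K)"
      by (simp add: exp_add[symmetric] algebra_simps)
    finally show ?thesis .
  qed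
  have t2: "K * (n2 * exp (- K * x)) \<le> 2 * R * exp (- (d - 3 * a / 2) * K)"
  proof -
    have ex: "exp (- K * x) \<le> exp (- K * (a / 2))" using K x by simp
    have "K * (n2 * exp (- K * x)) \<le> K * (3 * A / 2 * exp (- K * (a / 2)))"
      using K n2 n20 ex by (intro mult_left_mono mult_mono) auto
    also have "\<dots> = (K * A) * (3 / 2) * exp (- K * (a / 2))" by (simp add: algebra_simps)
    also have "\<dots> \<le> (4 * I / D) * (3 / 2) * exp (- K * (a / 2))"
      using KA by (intro mult_right_mono) auto
    also have "\<dots> = 6 * I * exp (- K * (a / 2)) * (1 / D)" by (simp add: field_simps)
    also have "\<dots> \<le> 6 * (R * exp (- K * d)) * exp (- K * (a / 2)) * (1 / (3 * q))"
      using I I0 invD2 D0 by (intro mult_mono mult_right_mono mult_left_mono) auto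
    also have "\<dots> = 2 * R * (exp (- K * d) * exp (- K * (a / 2)) * exp (2 * K * a))"
      unfolding q_def using q0 by (simp add: field_simps exp_minus)
    also have "exp (- K * d) * exp (- K * (a / 2)) * exp (2 * K * a) = exp (- (d - 3 * a / 2) * K)"
      by (simp add: exp_add[symmetric] algebra_simps)
    finally show ?thesis .
  qed
  show ?thesis using t1 t2 by (simp add: distrib_left)
qed

lemma cb_scalar:
  fixes K d s dl R Ci I A n :: real
  assumes K: "K > 0" and dl: "dl > 0" and s: "s > 0" and s1: "s \<le> 1" and R: "R \<ge> 0" and Ci: "Ci \<ge> 0" and d: "d \<ge> 0"
    and I: "I \<le> R * exp (- K * d)" and Is: "I \<le> Ci * K" and I0: "0 \<le> I"
    and A: "A \<le> 4 * I / (K * (dl * s + Q))" and Q: "Q \<ge> 0"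
    and n: "n \<le> A * s / 2 \<or> n \<le> 3 * A / 2"
  shows "n \<le> 8 * (Ci * exp d + R) / (dl * s) * exp (- K * d)"
proof -
  have IK: "I / K \<le> (Ci * exp d + R) * exp (- K * d)"
  proof (cases "K \<le> 1")
    case True
    have "I / K \<le> Ci" using Is K by (simp add: field_simps)
    also have "\<dots> \<le> Ci * (exp d * exp (- K * d))"
    proof -
      have "exp d * exp (- K * d) = exp ((1 - K) * d)" by (simp add: exp_add[symmetric] algebra_simps)
      also have "\<dots> \<ge> 1" using True d by simp
      finally show ?thesis using Ci by (simp add: mult_le_cancel_left1)
    qed
    also have "\<dots> \<le> (Ci * exp d + R) * exp (- K * d)" using R by (simp add: algebra_simps)
    finally show ?thesis .
  next
    case False
    have "I / K \<le> I" using False I0 by (simp add: divide_le_eq mult_le_cancel_left1 mult.commute)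
    also have "\<dots> \<le> R * exp (- K * d)" by (rule I)
    also have "\<dots> \<le> (Ci * exp d + R) * exp (- K * d)" using Ci by (simp add: algebra_simps)
    finally show ?thesis .
  qed
  have A2: "A \<le> 4 / (dl * s) * (I / K)"
  proof -
    have "4 * I / (K * (dl * s + Q)) \<le> 4 * I / (K * (dl * s))"
      using K dl s Q I0 add_pos_nonneg[OF mult_pos_pos[OF dl s] Q] by (intro divide_left_mono mult_left_mono mult_pos_pos) auto
    thus ?thesis using A by (simp add: field_simps)
  qed
  have A3: "A \<le> 4 / (dl * s) * ((Ci * exp d + R) * exp (- K * d))"
    using order_trans[OF A2 mult_left_mono[OF IK]] dl s by simp
  have A0: "0 \<le> 4 / (dl * s) * ((Ci * exp d + R) * exp (- K * d))" using dl s Ci R by simp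
  have Z0: "0 \<le> (Ci * exp d + R) * exp (- K * d)" using Ci R by simp
  show ?thesis
    using n
  proof
    assume "n \<le> A * s / 2"
    also have "\<dots> \<le> 4 / (dl * s) * ((Ci * exp d + R) * exp (- K * d)) * s / 2"
      using divide_right_mono[OF mult_right_mono[OF A3 less_imp_le[OF s]], of 2] by simp
    also have "\<dots> \<le> 4 / (dl * s) * ((Ci * exp d + R) * exp (- K * d)) * 1 / 2"
      using A0 s1 by (intro divide_right_mono mult_left_mono) auto
    also have "\<dots> = 2 / (dl * s) * ((Ci * exp d + R) * exp (- K * d))" by simp
    also have "\<dots> \<le> 8 / (dl * s) * ((Ci * exp d + R) * exp (- K * d))"
      using Z0 dl s by (intro mult_right_mono divide_right_mono) auto
    also have "\<dots> = 8 * (Ci * exp d + R) / (dl * s) * exp (- K * d)" by simp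
    finally show ?thesis .
  next
    assume "n \<le> 3 * A / 2"
    also have "\<dots> \<le> 3 * (4 / (dl * s) * ((Ci * exp d + R) * exp (- K * d))) / 2"
      using divide_right_mono[OF mult_left_mono[OF A3, of 3], of 2] by simp
    also have "\<dots> = 6 / (dl * s) * ((Ci * exp d + R) * exp (- K * d))" by simp
    also have "\<dots> \<le> 8 / (dl * s) * ((Ci * exp d + R) * exp (- K * d))"
      using Z0 dl s by (intro mult_right_mono divide_right_mono) auto
    also have "\<dots> = 8 * (Ci * exp d + R) / (dl * s) * exp (- K * d)" by simp
    finally show ?thesis .
  qed
qed

lemma powr_bound:
  fixes dl s Cs th g :: real
  assumes dl: "dl > 0" and s: "s > 0" and sb: "s \<le> Cs * dl powr g" and th: "0 \<le> th" "th \<le> 1"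
  shows "dl * s^2 * (dl * s) powr (- 2 * th) \<le> Cs powr (2 - 2 * th) * dl powr (1 + 2 * g - 2 * th * (1 + g))"
proof -
  have Cs: "Cs \<ge> 0" using sb s dl by (smt (verit) powr_gt_zero zero_le_mult_iff)
  have e1: "dl * dl powr (- 2 * th) = dl powr (1 - 2 * th)"
    using powr_add[of dl 1 "- 2 * th"] dl by simp
  have e2: "s^2 * s powr (- 2 * th) = s powr (2 - 2 * th)"
    using powr_add[of s 2 "- 2 * th"] s powr_realpow[OF s, of 2] by simp
  have "dl * s^2 * (dl * s) powr (- 2 * th) = (dl * dl powr (- 2 * th)) * (s^2 * s powr (- 2 * th))"
    using dl s by (simp add: powr_mult mult_ac)
  also have "\<dots> = dl powr (1 - 2 * th) * s powr (2 - 2 * th)"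
    unfolding e1 e2 ..
  also have "s powr (2 - 2 * th) \<le> (Cs * dl powr g) powr (2 - 2 * th)"
    using th s sb by (intro powr_mono2) auto
  also have "(Cs * dl powr g) powr (2 - 2 * th) = Cs powr (2 - 2 * th) * dl powr (g * (2 - 2 * th))"
    using Cs dl by (simp add: powr_mult powr_powr)
  finally have "dl * s^2 * (dl * s) powr (- 2 * th) \<le> dl powr (1 - 2 * th) * (Cs powr (2 - 2 * th) * dl powr (g * (2 - 2 * th)))"
    using dl by (simp add: mult_left_mono)
  also have "\<dots> = Cs powr (2 - 2 * th) * dl powr (1 + 2 * g - 2 * th * (1 + g))"
    by (simp add: powr_add[symmetric] algebra_simps)
  finally show ?thesis .
qed

lemma s_le:
  fixes beta lam dl :: real
  assumes b: "beta > 0" and dl: "0 < dl" "dl < 1"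
  shows "dl + mu beta lam dl \<le> (2 + \<bar>lam\<bar>) * dl powr (min 1 beta)"
proof -
  have "dl = dl powr 1" using dl by simp
  also have "\<dots> \<le> dl powr (min 1 beta)" using dl by (intro powr_mono') auto
  finally have d1: "dl \<le> dl powr (min 1 beta)" .
  have d2: "dl powr beta \<le> dl powr (min 1 beta)" using dl by (intro powr_mono') auto
  have "dl + mu beta lam dl = 2 * dl + lam * dl powr beta" by (simp add: mu_def)
  also have "\<dots> \<le> 2 * dl + \<bar>lam\<bar> * dl powr beta" by (simp add: abs_if mult_right_mono)
  also have "\<dots> \<le> 2 * dl powr (min 1 beta) + \<bar>lam\<bar> * dl powr (min 1 beta)"
    using d1 d2 by (intro add_mono mult_left_mono) auto
  finally show ?thesis by (simp add: algebra_simps)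
qed

lemma powr_at_right_0: "e > 0 \<Longrightarrow> ((\<lambda>x::real. x powr e) \<longlongrightarrow> 0) (at_right 0)"
  by (rule tendsto_zero_powrI[OF tendsto_ident_at tendsto_const]) (auto simp: eventually_at_filter)

lemma ev_good:
  fixes beta lam :: real
  assumes b: "beta > 0" and f: "feasible beta lam"
  shows "eventually (\<lambda>dl. 0 < dl \<and> dl < 1 \<and> mu beta lam dl \<ge> 0 \<and> \<bar>lam\<bar> * dl powr beta \<le> 1
      \<and> dl + mu beta lam dl \<le> 1) (at_right 0)"
proof -
  have e1: "eventually (\<lambda>dl::real. 0 < dl \<and> dl < 1) (at_right 0)"
    unfolding eventually_at_right_field[of _ "0::real"] by (intro exI[of _ 1]) auto
  have "((\<lambda>dl. \<bar>lam\<bar> * dl powr beta) \<longlongrightarrow> \<bar>lam\<bar> * 0) (at_right 0)"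
    by (intro tendsto_mult tendsto_const powr_at_right_0 b)
  hence e2: "eventually (\<lambda>dl. \<bar>lam\<bar> * dl powr beta < 1) (at_right 0)"
    by (intro order_tendstoD(2)) auto
  have "((\<lambda>dl. (2 + \<bar>lam\<bar>) * dl powr (min 1 beta)) \<longlongrightarrow> (2 + \<bar>lam\<bar>) * 0) (at_right 0)"
    by (intro tendsto_mult tendsto_const powr_at_right_0) (use b in auto)
  hence e3: "eventually (\<lambda>dl. (2 + \<bar>lam\<bar>) * dl powr (min 1 beta) < 1) (at_right 0)"
    by (intro order_tendstoD(2)) auto
  have e4: "eventually (\<lambda>dl. mu beta lam dl \<ge> 0) (at_right 0)"
  proof (cases "lam \<ge> 0")
    case True
    show ?thesis using e1 by eventually_elim (use True in \<open>auto simp: mu_def\<close>)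
  next
    case False
    hence b1: "beta \<ge> 1" using f by (auto simp: feasible_def)
    show ?thesis
    proof (cases "beta = 1")
      case True
      hence "lam \<ge> -1" using f by (simp add: feasible_def)
      show ?thesis using e1
      proof eventually_elim
        case (elim dl)
        have "mu beta lam dl = (1 + lam) * dl" using True elim by (simp add: mu_def algebra_simps)
        thus ?case using \<open>lam \<ge> -1\<close> elim by simp
      qed
    next
      case False
      hence b2: "beta - 1 > 0" using b1 by simp
      have "((\<lambda>dl. \<bar>lam\<bar> * dl powr (beta - 1)) \<longlongrightarrow> \<bar>lam\<bar> * 0) (at_right 0)"
        by (intro tendsto_mult tendsto_const powr_at_right_0 b2)
      hence e5: "eventually (\<lambda>dl. \<bar>lam\<bar> * dl powr (beta - 1) < 1) (at_right 0)"
        by (intro order_tendstoD(2)) auto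
      show ?thesis using e1 e5
      proof eventually_elim
        case (elim dl)
        have pw: "dl powr beta = dl * dl powr (beta - 1)"
          using powr_add[of dl 1 "beta - 1"] elim by simp
        have "\<bar>lam * dl powr beta\<bar> = dl * (\<bar>lam\<bar> * dl powr (beta - 1))"
          using elim by (simp add: pw abs_mult)
        also have "\<dots> \<le> dl * 1" using elim by (intro mult_left_mono) auto
        finally have "\<bar>lam * dl powr beta\<bar> \<le> dl" by simp
        thus ?case by (simp add: mu_def)
      qed
    qed
  qed
  show ?thesis using e1 e2 e3 e4
  proof eventually_elim
    case (elim dl)
    have "dl + mu beta lam dl \<le> (2 + \<bar>lam\<bar>) * dl powr (min 1 beta)" using s_le[OF b] elim by auto
    thus ?case using elim by auto
  qed
qed

lemma E_good:
  fixes a beta lam xi D R Ci th c1 c2 dl :: real and rho :: "real \<Rightarrow> real \<Rightarrow> real"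
  assumes inP: "in_P a rho" and a: "a > 0" and xi: "0 < xi" "xi < a / 2"
    and D: "D = d0 rho" and Da: "D > a"
    and R: "R \<ge> 0" and Ib: "\<And>k. norm (I_k rho k) \<le> R * exp (- \<bar>k\<bar> * D)"
    and Ci: "Ci \<ge> 0" and Is: "\<And>k. norm (I_k rho k) \<le> Ci * \<bar>k\<bar>"
    and th: "0 \<le> th" "th \<le> 1"
    and c1: "c1 = D - 3 * a + 2 * a * th" "c1 > 0" and c2: "c2 = D - 3 * a / 2" "c2 > 0"
    and dl: "0 < dl" "dl < 1" and m: "mu beta lam dl \<ge> 0" and lb: "\<bar>lam\<bar> * dl powr beta \<le> 1"
    and s1: "dl + mu beta lam dl \<le> 1"
  shows "E a beta lam rho xi dl \<le> ennreal (dl * xi * (1 / pi) *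
      (2 * (2 * R * (dl + mu beta lam dl) * (dl * (dl + mu beta lam dl)) powr (- th))^2 / c1 + 8 * R^2 / c2))"
proof -
  note rm = P_rm[OF inP]
  define s where "s = dl + mu beta lam dl"
  have s0: "s > 0" unfolding s_def using dl m by simp
  have s1': "s \<le> 1" unfolding s_def by (rule s1)
  have dm: "\<bar>dl - mu beta lam dl\<bar> \<le> 1"
    using lb by (simp add: mu_def abs_mult)
  define P where "P = 8 * (Ci * exp D + R) / (dl * s)"
  define al where "al = 2 * R * s * (dl * s) powr (- th)"
  have al0: "al \<ge> 0" unfolding al_def using R s0 by simp
  define h where "h k = al * exp (- c1 * \<bar>k\<bar>) + 2 * R * exp (- c2 * \<bar>k\<bar>)" for k :: real
  have P0: "P \<ge> 0" unfolding P_def using Ci R dl s0 by simp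
  have D0: "D \<ge> 0" using Da a by simp
  have Anz: "norm (A_k a beta lam rho dl k) \<le> 4 * norm (I_k rho k) / (\<bar>k\<bar> * (dl * s + 3 * (exp (- \<bar>k\<bar> * a))^2))"
    if "k \<noteq> 0" for k
    using A_bound[OF dl(1) _ m that, of a rho] dl unfolding s_def by simp
  have n1A: "norm (cc1 a beta lam rho dl k) \<le> norm (A_k a beta lam rho dl k) * s / 2" for k
    using cc1_bound[OF dl(1) m, of a rho k] unfolding s_def .
  have n2A: "norm (cc2 a beta lam rho dl k) \<le> 3 * norm (A_k a beta lam rho dl k) / 2" for k
  proof -
    have "norm (cc2 a beta lam rho dl k) \<le> norm (A_k a beta lam rho dl k) * (2 + \<bar>dl - mu beta lam dl\<bar>) / 2"
      by (rule cc2_bound)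
    also have "\<dots> \<le> norm (A_k a beta lam rho dl k) * 3 / 2"
      using dm by (intro divide_right_mono mult_left_mono) auto
    finally show ?thesis by simp
  qed
  have c1b: "norm (cc1 a beta lam rho dl k) \<le> P * exp (- \<bar>k\<bar> * D)" for k
  proof (cases "k = 0")
    case True thus ?thesis using P0 by (simp add: cc1_def)
  next
    case False
    show ?thesis unfolding P_def
      by (rule cb_scalar[where I="norm (I_k rho k)" and A="norm (A_k a beta lam rho dl k)" and Q="3 * (exp (- \<bar>k\<bar> * a))^2"])
         (use False dl s0 s1' R Ci D0 Ib[of k] Is[of k] Anz[OF False] n1A[of k] in auto)
  qed
  have c2b: "norm (cc2 a beta lam rho dl k) \<le> P * exp (- \<bar>k\<bar> * D)" for k
  proof (cases "k = 0")
    case True thus ?thesis using P0 by (simp add: cc2_def)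
  next
    case False
    show ?thesis unfolding P_def
      by (rule cb_scalar[where I="norm (I_k rho k)" and A="norm (A_k a beta lam rho dl k)" and Q="3 * (exp (- \<bar>k\<bar> * a))^2"])
         (use False dl s0 s1' R Ci D0 Ib[of k] Is[of k] Anz[OF False] n2A[of k] in auto)
  qed
  have hm: "h \<in> borel_measurable borel" unfolding h_def by measurable
  have hb: "\<bar>k\<bar> * (norm (cc1 a beta lam rho dl k) * exp (\<bar>k\<bar> * x) + norm (cc2 a beta lam rho dl k) * exp (- \<bar>k\<bar> * x)) \<le> h k"
    if x: "a / 2 \<le> x" "x \<le> a" for k x
  proof (cases "k = 0")
    case True thus ?thesis using al0 R by (simp add: h_def)
  next
    case False
    have "\<bar>k\<bar> * (norm (cc1 a beta lam rho dl k) * exp (\<bar>k\<bar> * x) + norm (cc2 a beta lam rho dl k) * exp (- \<bar>k\<bar> * x))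
       \<le> 2 * R * s * (dl * s) powr (- th) * exp (- (D - 3 * a + 2 * a * th) * \<bar>k\<bar>) + 2 * R * exp (- (D - 3 * a / 2) * \<bar>k\<bar>)"
      by (rule key_scalar[where I="norm (I_k rho k)" and A="norm (A_k a beta lam rho dl k)"])
         (use False a dl s0 R th x Ib[of k] Anz[OF False] n1A[of k] n2A[of k] in auto)
    thus ?thesis unfolding h_def al_def c1 c2 by simp
  qed
  have Da': "D > a" by (rule Da)
  have El: "E a beta lam rho xi dl \<le> ennreal dl * (ennreal xi * (ennreal (1 / pi) * (\<integral>\<^sup>+k. ennreal ((h k)\<^sup>2) \<partial>lborel)))"
    by (rule E_le[OF rm a Da' c1b c2b hm hb xi]) (use dl in auto)
  have hsq: "(h k)^2 \<le> 2 * al^2 * exp (- (2 * c1) * \<bar>k\<bar>) + 8 * R^2 * exp (- (2 * c2) * \<bar>k\<bar>)" for k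
  proof -
    have "(h k)^2 \<le> 2 * (al * exp (- c1 * \<bar>k\<bar>))^2 + 2 * (2 * R * exp (- c2 * \<bar>k\<bar>))^2"
      unfolding h_def by (smt (verit) sum_squares_bound power2_sum)
    also have "\<dots> = 2 * al^2 * exp (- (2 * c1) * \<bar>k\<bar>) + 8 * R^2 * exp (- (2 * c2) * \<bar>k\<bar>)"
      by (simp add: power_mult_distrib power2_eq_square exp_add[symmetric] algebra_simps)
    finally show ?thesis .
  qed
  have "(\<integral>\<^sup>+k. ennreal ((h k)\<^sup>2) \<partial>lborel) \<le> (\<integral>\<^sup>+k. ennreal (2 * al^2 * exp (- (2 * c1) * \<bar>k\<bar>)) + ennreal (8 * R^2 * exp (- (2 * c2) * \<bar>k\<bar>)) \<partial>lborel)"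
    by (intro nn_integral_mono) (use hsq in \<open>simp add: ennreal_plus[symmetric] del: ennreal_plus\<close>)
  also have "\<dots> = (\<integral>\<^sup>+k. ennreal (2 * al^2 * exp (- (2 * c1) * \<bar>k\<bar>)) \<partial>lborel) + (\<integral>\<^sup>+k. ennreal (8 * R^2 * exp (- (2 * c2) * \<bar>k\<bar>)) \<partial>lborel)"
    by (rule nn_integral_add) auto
  also have "\<dots> = ennreal (2 * al^2) * (\<integral>\<^sup>+k. ennreal (exp (- (2 * c1) * \<bar>k\<bar>)) \<partial>lborel) + ennreal (8 * R^2) * (\<integral>\<^sup>+k. ennreal (exp (- (2 * c2) * \<bar>k\<bar>)) \<partial>lborel)"
    by (subst nn_integral_cmult_real; simp)+
  also have "\<dots> \<le> ennreal (2 * al^2) * ennreal (2 / (2 * c1)) + ennreal (8 * R^2) * ennreal (2 / (2 * c2))"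
    using c1 c2 by (intro add_mono mult_left_mono exp_abs_nn) auto
  also have "\<dots> = ennreal (2 * al^2 * (2 / (2 * c1)) + 8 * R^2 * (2 / (2 * c2)))"
    using c1(2) c2(2) by (simp add: ennreal_mult[symmetric] ennreal_plus[symmetric] del: ennreal_plus)
  also have "2 * al^2 * (2 / (2 * c1)) + 8 * R^2 * (2 / (2 * c2)) = 2 * al^2 / c1 + 8 * R^2 / c2"
    using c1(2) c2(2) by simp
  finally have H: "(\<integral>\<^sup>+k. ennreal ((h k)\<^sup>2) \<partial>lborel) \<le> ennreal (2 * al^2 / c1 + 8 * R^2 / c2)" .
  have "E a beta lam rho xi dl \<le> ennreal dl * (ennreal xi * (ennreal (1 / pi) * ennreal (2 * al^2 / c1 + 8 * R^2 / c2)))"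
    using El H by (rule order_trans[OF _ mult_left_mono[OF mult_left_mono[OF mult_left_mono]]]) auto
  also have "\<dots> = ennreal (dl * xi * (1 / pi) * (2 * al^2 / c1 + 8 * R^2 / c2))"
  proof -
    have X0: "0 \<le> 2 * al^2 / c1 + 8 * R^2 / c2" using c1(2) c2(2) by simp
    show ?thesis
      using dl xi X0 by (simp add: ennreal_mult[symmetric] mult.assoc del: ennreal_plus)
  qed
  finally show ?thesis unfolding al_def s_def .
qed

theorem theorem5p6:
  fixes a beta lam xi :: real and rho :: "real \<Rightarrow> real \<Rightarrow> real"
  assumes "a > 0" and "beta > 0" and "feasible beta lam"
    and "0 < xi" and "xi < a / 2"
    and "in_P a rho"
    and "d0 rho > tau beta * a"
  shows "((\<lambda>delta. E a beta lam rho xi delta) \<longlongrightarrow> 0) (at_right 0)"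
proof -
  note inP = assms(6)
  have a: "a > 0" by (fact assms(1))
  define D where "D = d0 rho"
  define g where "g = min 1 beta"
  have g: "0 < g" "g \<le> 1" using assms(2) by (auto simp: g_def)
  have tg: "tau beta = (g + 2) / (g + 1)"
    unfolding tau_def g_def by (cases "beta < 1") auto
  have Dg: "D > (g + 2) / (g + 1) * a" using assms(7) tg D_def by simp
  have Dg2: "D * (g + 1) > (g + 2) * a"
  proof -
    have "(g + 2) / (g + 1) * a * (g + 1) < D * (g + 1)"
      using Dg g by (intro mult_strict_right_mono) auto
    thus ?thesis using g by simp
  qed
  have Dg3: "D + D * g > 2 * a + g * a" using Dg2 by (simp add: algebra_simps)
  have D32: "D > 3 / 2 * a"
  proof -
    have h0: "(g + 2) / (g + 1) \<ge> 3 / 2" using g by (simp add: le_divide_eq)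
    have h1: "(g + 2) / (g + 1) * a \<ge> 3 / 2 * a" using mult_right_mono[OF h0, of a] a by simp
    show ?thesis using h1 Dg by linarith
  qed
  have Da: "D > a" using D32 a by simp
  define th0 where "th0 = (3 * a - D) / (2 * a)"
  define th1 where "th1 = (1 + 2 * g) / (2 * (1 + g))"
  have th01: "th0 < th1"
  proof -
    have "(3 * a - D) * (2 * (1 + g)) < (1 + 2 * g) * (2 * a)"
      using Dg3 by (simp add: algebra_simps)
    thus ?thesis unfolding th0_def th1_def using a g
      by (simp add: divide_less_eq less_divide_eq mult_ac)
  qed
  have th1_lt: "th1 < 1" unfolding th1_def using g by simp
  define th where "th = (max 0 th0 + th1) / 2"
  have th1pos: "th1 > 0" unfolding th1_def using g by simp
  have th: "0 \<le> th" "th0 < th" "th < th1" "th \<le> 1"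
    unfolding th_def using th01 th1_lt th1pos by auto
  define c1 where "c1 = D - 3 * a + 2 * a * th"
  have c1pos: "c1 > 0"
  proof -
    have "2 * a * th0 = 3 * a - D" unfolding th0_def using a by simp
    moreover have "2 * a * th0 < 2 * a * th" using th a by simp
    ultimately show ?thesis unfolding c1_def by linarith
  qed
  define c2 where "c2 = D - 3 * a / 2"
  have c2pos: "c2 > 0" unfolding c2_def using D32 by simp
  define e0 where "e0 = 1 + 2 * g - 2 * th * (1 + g)"
  have e0pos: "e0 > 0"
  proof -
    have "th * (2 * (1 + g)) < 1 + 2 * g"
      using th(3) g unfolding th1_def by (simp add: less_divide_eq)
    thus ?thesis unfolding e0_def by (simp add: algebra_simps)
  qed
  define Rn where "Rn = (\<integral>\<^sup>+s. \<integral>\<^sup>+y. ennreal \<bar>rho s y\<bar> \<partial>lborel \<partial>lborel)"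
  have Rfin: "Rn < \<infinity>" unfolding Rn_def by (rule P_iter_finite[OF inP])
  define R where "R = enn2real Rn"
  have RnR: "Rn = ennreal R" unfolding R_def using Rfin by simp
  have R0: "R \<ge> 0" unfolding R_def by simp
  have Ib: "norm (I_k rho k) \<le> R * exp (- \<bar>k\<bar> * D)" for k
  proof -
    have "ennreal (norm (I_k rho k)) \<le> ennreal (exp (- \<bar>k\<bar> * D)) * ennreal R"
      using I_bound[OF P_rm[OF inP], of k] unfolding D_def Rn_def[symmetric] RnR .
    also have "\<dots> = ennreal (R * exp (- \<bar>k\<bar> * D))" using R0 by (simp add: ennreal_mult[symmetric] mult.commute)
    finally show ?thesis using R0 by (subst (asm) ennreal_le_iff) auto
  qed
  have d0pos: "d0 rho \<ge> 0" using Da a D_def by simp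
  obtain Ci where Ci: "Ci \<ge> 0" and Is: "\<And>k. norm (I_k rho k) \<le> Ci * \<bar>k\<bar>"
    using I_small[OF inP d0pos] by blast
  define Cs where "Cs = 2 + \<bar>lam\<bar>"
  define B where "B dl = xi * (1 / pi) * (8 * R^2 / c1 * (Cs powr (2 - 2 * th) * dl powr e0) + 8 * R^2 / c2 * dl)" for dl :: real
  have "(B \<longlongrightarrow> xi * (1 / pi) * (8 * R^2 / c1 * (Cs powr (2 - 2 * th) * 0) + 8 * R^2 / c2 * 0)) (at_right 0)"
    unfolding B_def by (intro tendsto_intros powr_at_right_0 e0pos tendsto_ident_at)
  hence Blim: "(B \<longlongrightarrow> 0) (at_right 0)" by simp
  have EB: "eventually (\<lambda>dl. E a beta lam rho xi dl \<le> ennreal (B dl)) (at_right 0)"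
    using ev_good[OF assms(2,3)]
  proof eventually_elim
    case (elim dl)
    hence dl: "0 < dl" "dl < 1" and m: "mu beta lam dl \<ge> 0" and lb: "\<bar>lam\<bar> * dl powr beta \<le> 1"
      and s1: "dl + mu beta lam dl \<le> 1" by auto
    define s where "s = dl + mu beta lam dl"
    have s0: "s > 0" unfolding s_def using dl m by simp
    have sCs: "s \<le> Cs * dl powr g" unfolding s_def Cs_def g_def by (rule s_le[OF assms(2) dl])
    have "E a beta lam rho xi dl \<le> ennreal (dl * xi * (1 / pi) *
      (2 * (2 * R * s * (dl * s) powr (- th))^2 / c1 + 8 * R^2 / c2))"
      unfolding s_def
      by (rule E_good[OF inP a assms(4,5) D_def Da R0 Ib Ci Is th(1,4) c1_def c1pos c2_def c2pos dl m lb s1])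
    also have "dl * xi * (1 / pi) * (2 * (2 * R * s * (dl * s) powr (- th))^2 / c1 + 8 * R^2 / c2) \<le> B dl"
    proof -
      have sq: "((dl * s) powr (- th))^2 = (dl * s) powr (- 2 * th)"
        by (simp add: power2_eq_square powr_add[symmetric])
      have "dl * (2 * (2 * R * s * (dl * s) powr (- th))^2 / c1) = 8 * R^2 / c1 * (dl * s^2 * (dl * s) powr (- 2 * th))"
        unfolding sq[symmetric] by (simp add: power_mult_distrib field_simps)
      also have "\<dots> \<le> 8 * R^2 / c1 * (Cs powr (2 - 2 * th) * dl powr e0)"
        unfolding e0_def using c1pos
        by (intro mult_left_mono powr_bound[OF dl(1) s0 sCs th(1,4)]) auto
      finally have t1: "dl * (2 * (2 * R * s * (dl * s) powr (- th))^2 / c1) \<le> 8 * R^2 / c1 * (Cs powr (2 - 2 * th) * dl powr e0)" .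
      have "dl * (2 * (2 * R * s * (dl * s) powr (- th))^2 / c1 + 8 * R^2 / c2)
          \<le> 8 * R^2 / c1 * (Cs powr (2 - 2 * th) * dl powr e0) + 8 * R^2 / c2 * dl"
        using t1 by (simp add: distrib_left mult.commute)
      hence "xi * (1 / pi) * (dl * (2 * (2 * R * s * (dl * s) powr (- th))^2 / c1 + 8 * R^2 / c2))
          \<le> xi * (1 / pi) * (8 * R^2 / c1 * (Cs powr (2 - 2 * th) * dl powr e0) + 8 * R^2 / c2 * dl)"
        using assms(4) by (intro mult_left_mono) auto
      thus ?thesis unfolding B_def by (simp add: mult_ac)
    qed
    hence "ennreal (dl * xi * (1 / pi) * (2 * (2 * R * s * (dl * s) powr (- th))^2 / c1 + 8 * R^2 / c2)) \<le> ennreal (B dl)"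
      by (rule ennreal_leI)
    finally show ?case .
  qed
  show ?thesis
  proof (rule tendsto_sandwich[where f="\<lambda>_. 0" and h="\<lambda>dl. ennreal (B dl)"])
    show "\<forall>\<^sub>F dl in at_right 0. 0 \<le> E a beta lam rho xi dl" by simp
    show "\<forall>\<^sub>F dl in at_right 0. E a beta lam rho xi dl \<le> ennreal (B dl)" by (rule EB)
    show "((\<lambda>_. 0) \<longlongrightarrow> (0::ennreal)) (at_right 0)" by simp
    show "((\<lambda>dl. ennreal (B dl)) \<longlongrightarrow> 0) (at_right 0)"
      using tendsto_ennrealI[OF Blim] by simp
  qed
qed

end
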